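(* Let $d,n\in\mathbb{N}$, $\tau\in(0,1)$, $\alpha\in(0,1)$. Let $\mu$ be a Borel probability distribution on $\mathbb{R}^d$ without atoms, and let $\mathcal{A}\subseteq\mathcal{B}(\mathbb{R}^d)$ with $\emptyset\in\mathcal{A}$ and $\dim_{\mathrm{VC}}(\mathcal{A})<\infty$. Let $\hat A\in\hat{\mathcal{A}}_n\bigl(\tau,\alpha,\mathcal{P}_{\mathrm{Lip}}(\mu)\bigr)$. Then for every $P\in\mathcal{P}_{\mathrm{Lip}}(\mu)$, with $\eta=\eta_P$, $$\mathbb{P}_P\bigl(\mu(\hat A)=0\mid \hat A\subseteq \mathcal{X}_\tau(\eta)\bigr)\ \ge\ \mathbb{P}_P\bigl(\{\mu(\hat A)=0\}\cap\{\hat A\subseteq\mathcal{X}_\tau(\eta)\}\bigr)\ \ge\ 1-\alpha,$$ and consequently $$R_\tau(\hat A,P,\mathcal{A})\ \ge\ (1-\alpha)\, M_\tau(P,\mathcal{A}) \;=\;\inf\Bigl\{R_\tau(\bar A,P,\mathcal{A}):\ \bar A\in\bar{\mathcal{A}}\cap\hat{\mathcal{A}}_n\bigl(\tau,\alpha,\mathcal{P}_{\mathrm{Lip}}(\mu)\bigr)\Bigr\}.$$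
   Context: For a distribution $P$ of a pair $(X,Y)$ on $\mathbb{R}^d\times[0,1]$, $\mu_P$ is the marginal law of $X$ and $\eta_P(x)=\mathbb{E}(Y\mid X=x)$ is the regression function (taken continuous). For $f:\mathbb{R}^d\to\mathbb{R}$ and $\xi\in\mathbb{R}$, $\mathcal{X}_\xi(f):=\{x:f(x)\ge\xi\}$. For $\mathcal{A}\subseteq\mathcal{B}(\mathbb{R}^d)$ with $\emptyset\in\mathcal A$, $M_\tau(P,\mathcal{A}):=\sup\{\mu_P(A):A\in\mathcal{A},\,A\subseteq\mathcal{X}_\tau(\eta_P)\}$. The sample is $\mathcal{D}=((X_1,Y_1),\dots,(X_n,Y_n))\sim P^{\otimes n}$. A data-dependent selection set is a map $\hat A:(\mathbb{R}^d\times[0,1])^n\to\mathcal{A}$ such that $(x,D)\mapsto \mathbb{1}\{x\in\hat A(D)\}$ is Borel measurable; $\hat{\mathcal{A}}_n$ denotes the set of these, and $\hat A$ abbreviates $\hat A(\mathcal D)$. For a family $\mathcal P$ of distributions, $\hat{\mathcal{A}}_n(\tau,\alpha,\mathcal{P})$ is the set of $\hat A\in\hat{\mathcal{A}}_n$ with $\inf_{P\in\mathcal{P}}\mathbb{P}_P(\hat A(\mathcal{D})\subseteq\mathcal{X}_\tau(\eta_P))\ge1-\alpha$. The regret is $R_\tau(\hat A,P,\mathcal A):=M_\tau(P,\mathcal A)-\mathbb{E}_P\{\mu_P(\hat A(\mathcal D))\mid \hat A(\mathcal D)\subseteq\mathcal X_\tau(\eta_P)\}$. $\mathcal{P}_{\mathrm{Lip}}(\mu)$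 is the set of Borel distributions on $\mathbb{R}^d\times[0,1]$ with marginal $\mu$ whose regression function is Lipschitz. $\hat A\in\hat{\mathcal A}_n$ is data independent if $\mathbb{1}\{\hat A(\mathcal D)=A\}$ is independent of $\mathcal D$ for every $A\in\mathcal A$; $\bar{\mathcal A}$ denotes the set of data-independent selection sets (which may use auxiliary randomisation). *)

theory Defs
  imports "HOL-Probability.Probability"
begin

text \<open>Outcomes: a sample of size n (as a function on indices {..<n}) together with an
  auxiliary uniform random variable U on [0,1] used for randomisation.\<close>

type_synonym 'a outcome = "(nat \<Rightarrow> 'a \<times> real) \<times> real"

definition is_distribution :: "('a::euclidean_space \<times> real) measure \<Rightarrow> bool" where
  "is_distribution P \<longleftrightarrow> prob_space P \<and> sets P = sets borel \<and> (AE z in P. snd z \<in> {0..1})"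

definition marginal :: "('a::euclidean_space \<times> real) measure \<Rightarrow> 'a measure" where
  "marginal P = distr P borel fst"

text \<open>eta is a version of E(Y | X = x).\<close>
definition is_regression :: "('a::euclidean_space \<times> real) measure \<Rightarrow> ('a \<Rightarrow> real) \<Rightarrow> bool" where
  "is_regression P eta \<longleftrightarrow> eta \<in> borel_measurable borel \<and> integrable (marginal P) eta \<and>
     (\<forall>B\<in>sets borel. (\<integral>z. indicator B (fst z) * snd z \<partial>P) = (\<integral>x. indicator B x * eta x \<partial>marginal P))"

definition P_Lip :: "'a::euclidean_space measure \<Rightarrow> (('a \<times> real) measure \<times> ('a \<Rightarrow> real)) set" where
  "P_Lip \<mu> = {(P, eta). is_distribution P \<and> marginal P = \<mu> \<and> is_regression P eta \<and>
      continuous_on UNIV eta \<and> (\<exists>L. L-lipschitz_on UNIV eta)}"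

definition superlevel :: "('a \<Rightarrow> real) \<Rightarrow> real \<Rightarrow> 'a set" where
  "superlevel f \<xi> = {x. f x \<ge> \<xi>}"

definition M_tau :: "real \<Rightarrow> ('a::euclidean_space \<times> real) measure \<Rightarrow> ('a \<Rightarrow> real) \<Rightarrow> 'a set set \<Rightarrow> real" where
  "M_tau \<tau> P eta \<A> = Sup {measure (marginal P) A | A. A \<in> \<A> \<and> A \<subseteq> superlevel eta \<tau>}"

definition shatters :: "'a set set \<Rightarrow> 'a set \<Rightarrow> bool" where
  "shatters \<A> F \<longleftrightarrow> {A \<inter> F | A. A \<in> \<A>} = Pow F"

definition finite_VC :: "'a set set \<Rightarrow> bool" where
  "finite_VC \<A> \<longleftrightarrow> (\<exists>k::nat. \<forall>F. finite F \<and> shatters \<A> F \<longrightarrow> card F \<le> k)"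

definition outcome_space :: "nat \<Rightarrow> ('a::euclidean_space) outcome measure" where
  "outcome_space n = (\<Pi>\<^sub>M i\<in>{..<n}. (borel :: ('a \<times> real) measure)) \<Otimes>\<^sub>M (borel :: real measure)"

definition sample_law :: "nat \<Rightarrow> ('a::euclidean_space \<times> real) measure \<Rightarrow> 'a outcome measure" where
  "sample_law n P = (\<Pi>\<^sub>M i\<in>{..<n}. P) \<Otimes>\<^sub>M uniform_measure lborel {0..1::real}"

definition selection_sets :: "nat \<Rightarrow> 'a::euclidean_space set set \<Rightarrow> ('a outcome \<Rightarrow> 'a set) set" where
  "selection_sets n \<A> = {Ah. (\<forall>\<omega>\<in>space (outcome_space n). Ah \<omega> \<in> \<A>) \<and>
      (\<lambda>(x, \<omega>). x \<in> Ah \<omega>) \<in> measurable ((borel :: 'a measure) \<Otimes>\<^sub>M outcome_space n) (count_space UNIV)}"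

definition cover_event :: "nat \<Rightarrow> ('a::euclidean_space outcome \<Rightarrow> 'a set) \<Rightarrow> ('a \<Rightarrow> real) \<Rightarrow> real \<Rightarrow> 'a outcome set" where
  "cover_event n Ah eta \<tau> = {\<omega> \<in> space (outcome_space n). Ah \<omega> \<subseteq> superlevel eta \<tau>}"

definition Ahat :: "nat \<Rightarrow> real \<Rightarrow> real \<Rightarrow> 'a::euclidean_space set set \<Rightarrow>
    (('a \<times> real) measure \<times> ('a \<Rightarrow> real)) set \<Rightarrow> ('a outcome \<Rightarrow> 'a set) set" where
  "Ahat n \<tau> \<alpha> \<A> PP = {Ah \<in> selection_sets n \<A>. \<forall>(P, eta)\<in>PP.
      cover_event n Ah eta \<tau> \<in> sets (sample_law n P) \<and>
      measure (sample_law n P) (cover_event n Ah eta \<tau>) \<ge> 1 - \<alpha>}"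

definition cond_prob :: "'b measure \<Rightarrow> 'b set \<Rightarrow> 'b set \<Rightarrow> real" where
  "cond_prob Q E C = measure Q (E \<inter> C) / measure Q C"

definition regret :: "nat \<Rightarrow> real \<Rightarrow> ('a::euclidean_space outcome \<Rightarrow> 'a set) \<Rightarrow>
    ('a \<times> real) measure \<Rightarrow> ('a \<Rightarrow> real) \<Rightarrow> 'a set set \<Rightarrow> real" where
  "regret n \<tau> Ah P eta \<A> = M_tau \<tau> P eta \<A> -
     (\<integral>\<omega>. indicator (cover_event n Ah eta \<tau>) \<omega> * measure (marginal P) (Ah \<omega>) \<partial>sample_law n P)
       / measure (sample_law n P) (cover_event n Ah eta \<tau>)"

definition data_indep :: "nat \<Rightarrow> 'a::euclidean_space set set \<Rightarrow>
    (('a \<times> real) measure \<times> ('a \<Rightarrow> real)) set \<Rightarrow> ('a outcome \<Rightarrow> 'a set) \<Rightarrow> bool" where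
  "data_indep n \<A> PP Ah \<longleftrightarrow> (\<forall>A\<in>\<A>. \<forall>(P, eta)\<in>PP.
     let Q = sample_law n P; E = {\<omega> \<in> space Q. Ah \<omega> = A} in
     E \<in> sets Q \<and>
     (\<forall>B\<in>sets (\<Pi>\<^sub>M i\<in>{..<n}. P).
        measure Q (E \<inter> (fst -` B \<inter> space Q)) = measure Q E * measure Q (fst -` B \<inter> space Q)))"

end

theory Submission
  imports Defs
begin


lemma meas_pairP:
  fixes P :: "('a::euclidean_space \<times> real) measure"
  assumes "sets P = sets borel"
  shows "measurable P = measurable (borel \<Otimes>\<^sub>M borel)"
proof -
  have "sets P = sets (borel \<Otimes>\<^sub>M (borel :: real measure))"
    using assms by (simp only: borel_prod)
  then show ?thesis by (intro ext measurable_cong_sets[OF _ refl])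
qed

lemma marg_prob:
  assumes "is_distribution P"
  shows "prob_space (marginal P)" "sets (marginal P) = sets borel"
proof -
  have sP: "sets P = sets borel" using assms unfolding is_distribution_def by simp
  have "fst \<in> measurable P borel" unfolding meas_pairP[OF sP] by measurable
  then show "prob_space (marginal P)" "sets (marginal P) = sets borel"
    using assms unfolding is_distribution_def marginal_def
    by (auto intro!: prob_space.prob_space_distr)
qed

lemma eta_ae:
  assumes D: "is_distribution P" and R: "is_regression P eta"
  shows "AE x in marginal P. 0 \<le> eta x \<and> eta x \<le> 1"
proof -
  interpret P: prob_space P using D by (simp add: is_distribution_def)
  have sP: "sets P = sets borel" using D by (simp add: is_distribution_def)
  have aeY: "AE z in P. snd z \<in> {0..1}" using D by (simp add: is_distribution_def)
  interpret M: prob_space "marginal P" using marg_prob[OF D] by simp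
  have em[measurable]: "eta \<in> borel_measurable borel" and ei: "integrable (marginal P) eta"
    and id: "\<And>B. B \<in> sets borel \<Longrightarrow> (\<integral>z. indicator B (fst z) * snd z \<partial>P) = (\<integral>x. indicator B x * eta x \<partial>marginal P)"
    using R by (auto simp: is_regression_def)
  have sM: "sets (marginal P) = sets borel" using marg_prob[OF D] by simp
  have mP: "measurable P = measurable (borel \<Otimes>\<^sub>M borel)" using meas_pairP[OF sP] .
  have mfst[measurable]: "fst \<in> measurable P borel" unfolding mP by measurable
  have msnd[measurable]: "snd \<in> borel_measurable P" unfolding mP by measurable
  have intP: "integrable P (\<lambda>z. indicator B (fst z) * snd z)" if B: "B \<in> sets borel" for B
  proof (rule P.integrable_const_bound[where B=1])
    have [measurable]: "B \<in> sets borel" by (rule B)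
    show "AE z in P. norm (indicator B (fst z) * snd z) \<le> 1"
      using aeY by eventually_elim (simp add: indicator_def)
    show "(\<lambda>z. indicator B (fst z) * snd z) \<in> borel_measurable P" by measurable
  qed
  define B0 where "B0 = {x. eta x < 0}"
  have B0[measurable]: "B0 \<in> sets borel" unfolding B0_def by measurable
  have iB0: "integrable (marginal P) (\<lambda>x. indicator B0 x * eta x)"
    using integrable_mult_indicator[of B0 "marginal P" eta] by (simp add: sM ei)
  have "(\<integral>z. indicator B0 (fst z) * snd z \<partial>P) \<ge> 0"
    by (rule integral_nonneg_AE) (use aeY in eventually_elim, simp)
  hence g1: "(\<integral>x. indicator B0 x * eta x \<partial>marginal P) \<ge> 0" using id[OF B0] by simp
  have g2: "(\<integral>x. indicator B0 x * eta x \<partial>marginal P) \<le> 0"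
  proof -
    have "0 \<le> (\<integral>x. - (indicator B0 x * eta x) \<partial>marginal P)"
      by (rule integral_nonneg_AE) (simp add: B0_def indicator_def)
    thus ?thesis by simp
  qed
  have e0: "(\<integral>x. - (indicator B0 x * eta x) \<partial>marginal P) = 0"
    using g1 g2 by simp
  have i0: "integrable (marginal P) (\<lambda>x. - (indicator B0 x * eta x))"
    using iB0 by simp
  have n0: "AE x in marginal P. 0 \<le> - (indicator B0 x * eta x)"
    by (simp add: B0_def indicator_def)
  have "AE x in marginal P. - (indicator B0 x * eta x) = 0"
    using integral_nonneg_eq_0_iff_AE[OF i0 n0] e0 by simp
  hence a1: "AE x in marginal P. 0 \<le> eta x"
    by eventually_elim (simp add: B0_def indicator_def split: if_splits)
  define B1 where "B1 = {x. eta x > 1}"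
  have B1[measurable]: "B1 \<in> sets borel" unfolding B1_def by measurable
  have iB1: "integrable (marginal P) (\<lambda>x. indicator B1 x * (eta x - 1))"
    using integrable_mult_indicator[of B1 "marginal P" "\<lambda>x. eta x - 1"] by (simp add: sM ei)
  have iB1': "integrable (marginal P) (\<lambda>x. indicator B1 x * eta x)"
    using integrable_mult_indicator[of B1 "marginal P" eta] by (simp add: sM ei)
  have iB1'': "integrable (marginal P) (\<lambda>x. indicator B1 x :: real)"
    using integrable_mult_indicator[of B1 "marginal P" "\<lambda>_. 1::real"] by (simp add: sM)
  have ii: "integrable P (\<lambda>z. indicator B1 (fst z) :: real)"
    by (rule P.integrable_const_bound[where B=1]) (simp_all add: indicator_def)
  have "(\<integral>z. indicator B1 (fst z) * snd z \<partial>P) \<le> (\<integral>z. indicator B1 (fst z) \<partial>P)"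
    by (rule integral_mono_AE[OF intP[OF B1] ii]) (use aeY in eventually_elim, simp add: indicator_def)
  also have "(\<integral>z. indicator B1 (fst z) \<partial>P) = (\<integral>x. indicator B1 x \<partial>marginal P :: real)"
    unfolding marginal_def by (rule integral_distr[OF mfst, of "indicator B1", symmetric]) simp
  finally have "(\<integral>x. indicator B1 x * eta x \<partial>marginal P) - (\<integral>x. indicator B1 x \<partial>marginal P) \<le> 0"
    using id[OF B1] by simp
  also have "(\<integral>x. indicator B1 x * eta x \<partial>marginal P) - (\<integral>x. indicator B1 x \<partial>marginal P)
      = (\<integral>x. indicator B1 x * eta x - indicator B1 x \<partial>marginal P)"
    using Bochner_Integration.integral_diff[OF iB1' iB1''] by simp
  also have "(\<lambda>x. indicator B1 x * eta x - indicator B1 x) = (\<lambda>x. indicator B1 x * (eta x - 1) :: real)"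
    by (simp add: algebra_simps)
  finally have le0: "(\<integral>x. indicator B1 x * (eta x - 1) \<partial>marginal P) \<le> 0" .
  moreover have "(\<integral>x. indicator B1 x * (eta x - 1) \<partial>marginal P) \<ge> 0"
    by (rule integral_nonneg_AE) (simp add: B1_def indicator_def)
  ultimately have e1: "(\<integral>x. indicator B1 x * (eta x - 1) \<partial>marginal P) = 0" by simp
  have n1: "AE x in marginal P. 0 \<le> indicator B1 x * (eta x - 1)"
    by (simp add: B1_def indicator_def)
  have "AE x in marginal P. indicator B1 x * (eta x - 1) = 0"
    using integral_nonneg_eq_0_iff_AE[OF iB1 n1] e1 by simp
  hence a2: "AE x in marginal P. eta x \<le> 1"
    by eventually_elim (simp add: B1_def indicator_def split: if_splits)
  show ?thesis using a1 a2 by eventually_elim auto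
qed



lemma reg_ext:
  assumes D: "is_distribution P" and R: "is_regression P eta"
    and f[measurable]: "f \<in> borel_measurable borel" and f01: "\<And>x. 0 \<le> f x \<and> f x \<le> 1"
  shows "(\<integral>z. f (fst z) * snd z \<partial>P) = (\<integral>x. f x * eta x \<partial>marginal P)"
proof -
  interpret P: prob_space P using D by (simp add: is_distribution_def)
  have sP: "sets P = sets borel" using D by (simp add: is_distribution_def)
  have aeY: "AE z in P. snd z \<in> {0..1}" using D by (simp add: is_distribution_def)
  interpret M: prob_space "marginal P" using marg_prob[OF D] by simp
  have em[measurable]: "eta \<in> borel_measurable borel" and ei: "integrable (marginal P) eta"
    and id: "\<And>B. B \<in> sets borel \<Longrightarrow> (\<integral>z. indicator B (fst z) * snd z \<partial>P) = (\<integral>x. indicator B x * eta x \<partial>marginal P)"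
    using R by (auto simp: is_regression_def)
  have sM: "sets (marginal P) = sets borel" using marg_prob[OF D] by simp
  have mM: "measurable (marginal P) = measurable borel" using sM
    by (intro ext measurable_cong_sets) auto
  have mP: "measurable P = measurable (borel \<Otimes>\<^sub>M borel)" using meas_pairP[OF sP] .
  have mfst[measurable]: "fst \<in> measurable P borel" unfolding mP by measurable
  have msnd[measurable]: "snd \<in> borel_measurable P" unfolding mP by measurable
  have aeE: "AE x in marginal P. 0 \<le> eta x \<and> eta x \<le> 1" using eta_ae[OF D R] .
  have intP: "integrable P (\<lambda>z. g (fst z) * snd z)" if [measurable]: "g \<in> borel_measurable borel"
      and "\<And>x. 0 \<le> g x \<and> g x \<le> 1" for g
    apply (rule P.integrable_const_bound[where B=1])
    using aeY apply eventually_elim using that(2) apply (auto simp: abs_mult intro!: mult_le_one)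
    by measurable
  have intM: "integrable (marginal P) (\<lambda>x. g x * eta x)" if [measurable]: "g \<in> borel_measurable borel"
      and "\<And>x. 0 \<le> g x \<and> g x \<le> 1" for g
    apply (rule M.integrable_const_bound[where B=1])
    using aeE apply eventually_elim using that(2) apply (auto simp: abs_mult intro!: mult_le_one)
    unfolding mM by measurable
  define N1 where "N1 = distr (density P (\<lambda>z. ennreal (snd z))) borel fst"
  define N2 where "N2 = density (marginal P) (\<lambda>x. ennreal (eta x))"
  have spP: "space P = UNIV" using sets_eq_imp_space_eq[OF sP] by simp
  have mfst': "fst \<in> measurable (density P (\<lambda>z. ennreal (snd z))) borel" by simp
  have N12: "N1 = N2"
  proof (rule measure_eqI)
    show "sets N1 = sets N2" by (simp add: N1_def N2_def sM)
    fix B assume "B \<in> sets N1" then have B[measurable]: "B \<in> sets borel" by (simp add: N1_def)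
    have "emeasure N1 B = (\<integral>\<^sup>+z. ennreal (snd z) * indicator (fst -` B) z \<partial>P)"
    proof -
      have fB: "fst -` B \<in> sets P" using measurable_sets[OF mfst B] spP by simp
      show ?thesis
      unfolding N1_def using mfst' fB
      by (subst emeasure_distr) (auto simp: emeasure_density spP intro!: measurable_sets)
    qed
    also have "\<dots> = (\<integral>\<^sup>+z. ennreal (indicator B (fst z) * snd z) \<partial>P)"
      by (intro nn_integral_cong) (auto simp: indicator_def)
    also have "\<dots> = ennreal (\<integral>z. indicator B (fst z) * snd z \<partial>P)"
      by (rule nn_integral_eq_integral[OF intP]) (use aeY in \<open>auto elim!: eventually_mono\<close>)
    also have "\<dots> = ennreal (\<integral>x. indicator B x * eta x \<partial>marginal P)" using id[OF B] by simp
    also have "\<dots> = (\<integral>\<^sup>+x. ennreal (indicator B x * eta x) \<partial>marginal P)"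
      by (rule nn_integral_eq_integral[OF intM, symmetric]) (use aeE in \<open>auto elim!: eventually_mono\<close>)
    also have "\<dots> = emeasure N2 B"
      unfolding N2_def
      by (subst emeasure_density) (auto simp: sM mM intro!: nn_integral_cong simp: indicator_def)
    finally show "emeasure N1 B = emeasure N2 B" .
  qed
  have "ennreal (\<integral>z. f (fst z) * snd z \<partial>P) = (\<integral>\<^sup>+z. ennreal (f (fst z) * snd z) \<partial>P)"
    by (rule nn_integral_eq_integral[OF intP, symmetric]) (use aeY f01 in \<open>auto elim!: eventually_mono\<close>)
  also have "\<dots> = (\<integral>\<^sup>+z. ennreal (snd z) * ennreal (f (fst z)) \<partial>P)"
    by (intro nn_integral_cong_AE) (use aeY f01 in \<open>auto elim!: eventually_mono simp: ennreal_mult mult.commute\<close>)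
  also have "\<dots> = (\<integral>\<^sup>+x. ennreal (f x) \<partial>N1)"
    unfolding N1_def by (subst nn_integral_distr) (auto simp: nn_integral_density)
  also have "\<dots> = (\<integral>\<^sup>+x. ennreal (f x) \<partial>N2)" by (simp add: N12)
  also have "\<dots> = (\<integral>\<^sup>+x. ennreal (eta x) * ennreal (f x) \<partial>marginal P)"
    unfolding N2_def by (subst nn_integral_density) (auto simp: mM)
  also have "\<dots> = (\<integral>\<^sup>+x. ennreal (f x * eta x) \<partial>marginal P)"
    by (intro nn_integral_cong_AE) (use aeE f01 in \<open>auto elim!: eventually_mono simp: ennreal_mult mult.commute\<close>)
  also have "\<dots> = ennreal (\<integral>x. f x * eta x \<partial>marginal P)"
    by (rule nn_integral_eq_integral[OF intM]) (use aeE f01 in \<open>auto elim!: eventually_mono\<close>)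
  finally have "ennreal (\<integral>z. f (fst z) * snd z \<partial>P) = ennreal (\<integral>x. f x * eta x \<partial>marginal P)" .
  moreover have "(\<integral>z. f (fst z) * snd z \<partial>P) \<ge> 0"
    by (rule integral_nonneg_AE) (use aeY f01 in \<open>auto elim!: eventually_mono\<close>)
  moreover have "(\<integral>x. f x * eta x \<partial>marginal P) \<ge> 0"
    by (rule integral_nonneg_AE) (use aeE f01 in \<open>auto elim!: eventually_mono\<close>)
  ultimately show ?thesis by simp
qed



lemma lip_mult_bounded:
  fixes f g :: "'a::metric_space \<Rightarrow> real"
  assumes f: "A-lipschitz_on UNIV f" and g: "B-lipschitz_on UNIV g"
    and fb: "\<And>x. \<bar>f x\<bar> \<le> 1" and gb: "\<And>x. \<bar>g x\<bar> \<le> 1"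
  shows "(A+B)-lipschitz_on UNIV (\<lambda>x. f x * g x)"
proof (rule lipschitz_onI)
  show "0 \<le> A + B" using lipschitz_on_nonneg[OF f] lipschitz_on_nonneg[OF g] by simp
  fix x y :: 'a
  have "\<bar>f x * g x - f y * g y\<bar> = \<bar>(f x - f y) * g x + f y * (g x - g y)\<bar>"
    by (simp add: algebra_simps)
  also have "\<dots> \<le> \<bar>f x - f y\<bar> * \<bar>g x\<bar> + \<bar>f y\<bar> * \<bar>g x - g y\<bar>"
    by (metis abs_mult abs_triangle_ineq)
  also have "\<dots> \<le> \<bar>f x - f y\<bar> * 1 + 1 * \<bar>g x - g y\<bar>"
    by (intro add_mono mult_mono) (auto simp: fb gb)
  also have "\<dots> \<le> A * dist x y + B * dist x y"
    using lipschitz_onD[OF f, of x y] lipschitz_onD[OF g, of x y] by (simp add: dist_real_def)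
  finally show "dist (f x * g x) (f y * g y) \<le> (A + B) * dist x y"
    by (simp add: dist_real_def algebra_simps)
qed

definition clamp :: "real \<Rightarrow> real" where "clamp y = max 0 (min 1 y)"

lemma clamp_bounds: "0 \<le> clamp y" "clamp y \<le> 1"
  by (auto simp: clamp_def)

lemma clamp_lip: "\<bar>clamp a - clamp b\<bar> \<le> \<bar>a - b\<bar>"
  by (auto simp: clamp_def)

lemma clamp_cont: "continuous_on UNIV clamp"
  unfolding clamp_def by (intro continuous_intros)

lemma lip_clamp_comp:
  fixes eta :: "'a::metric_space \<Rightarrow> real"
  assumes "L-lipschitz_on UNIV eta"
  shows "L-lipschitz_on UNIV (\<lambda>x. clamp (eta x))"
proof (rule lipschitz_onI)
  show "0 \<le> L" using lipschitz_on_nonneg[OF assms] .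
  fix x y
  show "dist (clamp (eta x)) (clamp (eta y)) \<le> L * dist x y"
    using clamp_lip[of "eta x" "eta y"] lipschitz_onD[OF assms, of x y] by (simp add: dist_real_def)
qed

lemma perturb:
  fixes P :: "('a::euclidean_space \<times> real) measure" and h :: "'a \<Rightarrow> real"
  assumes PL: "(P, eta) \<in> P_Lip \<mu>"
    and hc: "continuous_on UNIV h" and hL: "K-lipschitz_on UNIV h" and h01: "\<And>x. 0 \<le> h x \<and> h x \<le> 1"
  shows "(distr P borel (\<lambda>z. (fst z, h (fst z) * snd z)), \<lambda>x. h x * clamp (eta x)) \<in> P_Lip \<mu>"
proof -
  have D: "is_distribution P" and mP: "marginal P = \<mu>" and R: "is_regression P eta"
    and ec: "continuous_on UNIV eta" and eL: "\<exists>L. L-lipschitz_on UNIV eta"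
    using PL by (auto simp: P_Lip_def)
  interpret P: prob_space P using D by (simp add: is_distribution_def)
  have sP: "sets P = sets borel" using D by (simp add: is_distribution_def)
  have aeY: "AE z in P. snd z \<in> {0..1}" using D by (simp add: is_distribution_def)
  have measP: "measurable P = measurable borel"
    using sP by (intro ext measurable_cong_sets[OF _ refl])
  define T where "T = (\<lambda>z::'a \<times> real. (fst z, h (fst z) * snd z))"
  have hfc: "continuous_on UNIV (\<lambda>z::'a\<times>real. h (fst z))"
    by (rule continuous_on_compose2[OF hc]) (auto intro: continuous_intros)
  have Tc: "continuous_on UNIV T" unfolding T_def
    by (intro continuous_intros hfc)
  have Tb: "T \<in> borel_measurable borel" using borel_measurable_continuous_onI[OF Tc] .
  have TP[measurable]: "T \<in> measurable P borel" unfolding measP by (rule Tb)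
  have fstb: "(fst :: 'a \<times> real \<Rightarrow> 'a) \<in> borel_measurable borel"
    by (rule borel_measurable_continuous_onI) (intro continuous_intros)
  have sndb: "(snd :: 'a \<times> real \<Rightarrow> real) \<in> borel_measurable borel"
    by (rule borel_measurable_continuous_onI) (intro continuous_intros)
  define P' where "P' = distr P borel T"
  interpret P': prob_space P' unfolding P'_def by (rule P.prob_space_distr[OF TP])
  have sP': "sets P' = sets borel" by (simp add: P'_def)
  have set01: "{x \<in> space borel. snd x \<in> {0..1::real}} \<in> sets (borel :: ('a \<times> real) measure)"
    using measurable_sets[OF sndb, of "{0..1}"] by (simp add: vimage_def)
  have aeY': "AE z in P'. snd z \<in> {0..1}"
    unfolding P'_def
    apply (subst AE_distr_iff[OF TP set01])
    using aeY apply eventually_elim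
    using h01 by (auto simp: T_def intro: mult_le_one mult_nonneg_nonneg)
  have D': "is_distribution P'"
    unfolding is_distribution_def using P'.prob_space_axioms sP' aeY' by simp
  have mP': "marginal P' = \<mu>"
  proof -
    have "marginal P' = distr P borel (fst \<circ> T)"
      unfolding marginal_def P'_def by (rule distr_distr[OF fstb TP])
    also have "fst \<circ> T = fst" by (auto simp: T_def)
    finally show ?thesis using mP by (simp add: marginal_def)
  qed
  have eta'c: "continuous_on UNIV (\<lambda>x. h x * clamp (eta x))"
    by (intro continuous_intros hc continuous_on_compose2[OF clamp_cont ec]) auto
  obtain L where L: "L-lipschitz_on UNIV eta" using eL by auto
  have eta'L: "(K + L)-lipschitz_on UNIV (\<lambda>x. h x * clamp (eta x))"
    by (rule lip_mult_bounded[OF hL lip_clamp_comp[OF L]]) (use h01 clamp_bounds in auto)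
  have em[measurable]: "eta \<in> borel_measurable borel" using R by (simp add: is_regression_def)
  have eta'm[measurable]: "(\<lambda>x. h x * clamp (eta x)) \<in> borel_measurable borel"
    using borel_measurable_continuous_onI[OF eta'c] .
  have hm[measurable]: "h \<in> borel_measurable borel" using borel_measurable_continuous_onI[OF hc] .
  interpret M: prob_space \<mu> using marg_prob[OF D] mP by simp
  have sM: "sets \<mu> = sets borel" using marg_prob[OF D] mP by simp
  have measM: "measurable \<mu> = measurable borel"
    using sM by (intro ext measurable_cong_sets[OF _ refl])
  have eta'i: "integrable \<mu> (\<lambda>x. h x * clamp (eta x))"
    by (rule M.integrable_const_bound[where B=1])
       (use h01 clamp_bounds in \<open>auto simp: measM abs_mult intro!: mult_le_one\<close>)
  have aeE: "AE x in \<mu>. 0 \<le> eta x \<and> eta x \<le> 1" using eta_ae[OF D R] unfolding mP .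
  have reg: "(\<integral>z. indicator B (fst z) * snd z \<partial>P') = (\<integral>x. indicator B x * (h x * clamp (eta x)) \<partial>\<mu>)"
    if B[measurable]: "B \<in> sets borel" for B
  proof -
    have im: "(\<lambda>z::'a\<times>real. indicator B (fst z) * snd z :: real) \<in> borel_measurable borel"
      using fstb sndb by measurable
    have "(\<integral>z. indicator B (fst z) * snd z \<partial>P') = (\<integral>z. indicator B (fst (T z)) * snd (T z) \<partial>P)"
      unfolding P'_def by (rule integral_distr[OF TP im])
    also have "\<dots> = (\<integral>z. (indicator B (fst z) * h (fst z)) * snd z \<partial>P)"
      by (simp add: T_def mult.assoc)
    also have "\<dots> = (\<integral>x. (indicator B x * h x) * eta x \<partial>marginal P)"
      by (rule reg_ext[OF D R]) (use h01 in \<open>auto simp: indicator_def\<close>)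
    also have "\<dots> = (\<integral>x. indicator B x * (h x * clamp (eta x)) \<partial>\<mu>)"
      unfolding mP
    proof (rule integral_cong_AE)
      show "(\<lambda>x. indicator B x * h x * eta x) \<in> borel_measurable \<mu>" unfolding measM by measurable
      show "(\<lambda>x. indicator B x * (h x * clamp (eta x))) \<in> borel_measurable \<mu>" unfolding measM by measurable
      show "AE x in \<mu>. indicator B x * h x * eta x = indicator B x * (h x * clamp (eta x))"
        using aeE by eventually_elim (simp add: clamp_def)
    qed
    finally show ?thesis .
  qed
  have R': "is_regression P' (\<lambda>x. h x * clamp (eta x))"
    unfolding is_regression_def using eta'm eta'i reg mP' by simp
  show ?thesis
    unfolding P'_def[symmetric] T_def[symmetric] P_Lip_def
    using D' mP' R' eta'c eta'L by blast
qed



lemma unif_prob: "prob_space (uniform_measure lborel {0..1::real})"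
  by (rule prob_space_uniform_measure) auto

lemma sets_unif: "sets (uniform_measure lborel {0..1::real}) = sets borel"
  by simp

lemma sample_prob:
  assumes "prob_space P"
  shows "prob_space (sample_law n P)"
proof -
  interpret PP: prob_space "PiM {..<n} (\<lambda>_. P)"
    by (rule prob_space_PiM) (use assms in auto)
  interpret U: prob_space "uniform_measure lborel {0..1::real}" by (rule unif_prob)
  interpret pair_prob_space "PiM {..<n} (\<lambda>_. P)" "uniform_measure lborel {0..1::real}" ..
  show ?thesis unfolding sample_law_def by unfold_locales
qed

lemma sets_sample:
  assumes "sets P = sets borel"
  shows "sets (sample_law n P) = sets (outcome_space n)"
  unfolding sample_law_def outcome_space_def
  by (intro sets_pair_measure_cong sets_PiM_cong refl) (simp_all add: assms)

lemma space_sample: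
  assumes "sets P = sets borel"
  shows "space (sample_law n P) = space (outcome_space n)"
  using sets_eq_imp_space_eq[OF sets_sample[OF assms]] .

lemma sample_law_distr:
  fixes P :: "('a::euclidean_space \<times> real) measure"
  assumes P: "prob_space P" and sP: "sets P = sets borel" and T: "T \<in> measurable borel borel"
  shows "sample_law n (distr P borel T) =
    distr (sample_law n P) (outcome_space n) (\<lambda>\<omega>. (compose {..<n} T (fst \<omega>), snd \<omega>))"
proof -
  define P' where "P' = distr P borel T"
  have sP': "sets P' = sets borel" by (simp add: P'_def)
  have TP: "T \<in> measurable P P'"
    using T measurable_cong_sets[OF sP sP'] by simp
  have TP2: "T \<in> measurable P borel"
    by (subst measurable_cong_sets[OF sP refl]) (rule T)
  interpret P: prob_space P by (rule P)
  have P'p: "prob_space P'" unfolding P'_def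
    by (rule P.prob_space_distr[OF TP2])
  have dT: "distr P P' T = P'"
    unfolding P'_def by (rule distr_cong) auto
  have "distr (PiM {..<n} (\<lambda>_. P)) (PiM {..<n} (\<lambda>_. P')) (compose {..<n} T) = PiM {..<n} (\<lambda>i. distr P P' T)"
    by (rule distr_PiM_finite_prob_space') (use P P'p TP in auto)
  hence e1: "distr (PiM {..<n} (\<lambda>_. P)) (PiM {..<n} (\<lambda>_. P')) (compose {..<n} T) = PiM {..<n} (\<lambda>_. P')"
    by (simp add: dT)
  interpret U: prob_space "uniform_measure lborel {0..1::real}" by (rule unif_prob)
  have idU: "distr (uniform_measure lborel {0..1::real}) (uniform_measure lborel {0..1::real}) (\<lambda>x. x) = uniform_measure lborel {0..1::real}"
    by (rule distr_id2) simp
  have mc: "compose {..<n} T \<in> measurable (PiM {..<n} (\<lambda>_. P)) (PiM {..<n} (\<lambda>_. P'))"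
    unfolding compose_def
  proof (rule measurable_restrict)
    fix i assume i: "i \<in> {..<n}"
    show "(\<lambda>x. T (x i)) \<in> measurable (PiM {..<n} (\<lambda>_. P)) P'"
      using measurable_compose[OF measurable_component_singleton[OF i, of "\<lambda>_. P"] TP] by simp
  qed
  have "sample_law n P' = distr (PiM {..<n} (\<lambda>_. P)) (PiM {..<n} (\<lambda>_. P')) (compose {..<n} T)
      \<Otimes>\<^sub>M distr (uniform_measure lborel {0..1::real}) (uniform_measure lborel {0..1::real}) (\<lambda>x. x)"
    unfolding sample_law_def e1 idU ..
  also have "\<dots> = distr (sample_law n P) (PiM {..<n} (\<lambda>_. P') \<Otimes>\<^sub>M uniform_measure lborel {0..1::real})
      (\<lambda>(x, y). (compose {..<n} T x, y))"
    unfolding sample_law_def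
    by (rule pair_measure_distr[OF mc]) (simp_all add: idU U.sigma_finite_measure)
  also have "\<dots> = distr (sample_law n P) (outcome_space n) (\<lambda>\<omega>. (compose {..<n} T (fst \<omega>), snd \<omega>))"
    by (rule distr_cong) (auto simp: outcome_space_def sP' intro!: sets_pair_measure_cong sets_PiM_cong)
  finally show ?thesis unfolding P'_def .
qed



lemma comp_measure:
  fixes P :: "('a::euclidean_space \<times> real) measure"
  assumes P: "prob_space P" and sP: "sets P = sets borel" and U: "U \<in> sets borel" and i: "i < n"
  shows "measure (sample_law n P) {\<omega> \<in> space (sample_law n P). fst (fst \<omega> i) \<in> U} = measure (marginal P) U"
proof -
  interpret U: prob_space "uniform_measure lborel {0..1::real}" by (rule unif_prob)
  define PP where "PP = PiM {..<n} (\<lambda>_. P)"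
  have Q: "sample_law n P = PP \<Otimes>\<^sub>M uniform_measure lborel {0..1::real}"
    unfolding sample_law_def PP_def ..
  have mfst: "fst \<in> measurable P borel"
    by (subst measurable_cong_sets[OF sP refl]) (rule borel_measurable_continuous_onI, intro continuous_intros)
  have mi: "(\<lambda>f. f i) \<in> measurable PP P" unfolding PP_def
    by (rule measurable_component_singleton) (use i in simp)
  have m1: "fst \<in> measurable (sample_law n P) PP" unfolding Q by (rule measurable_fst)
  have mX: "(\<lambda>\<omega>. fst (fst \<omega> i)) \<in> measurable (sample_law n P) borel"
    using measurable_compose[OF m1 measurable_compose[OF mi mfst]] by simp
  have "distr (sample_law n P) borel (\<lambda>\<omega>. fst (fst \<omega> i)) = distr (distr (sample_law n P) PP fst) borel (\<lambda>f. fst (f i))"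
    using distr_distr[OF measurable_compose[OF mi mfst] m1] by (simp add: comp_def)
  also have "distr (sample_law n P) PP fst = PP"
    unfolding Q by (rule U.distr_pair_fst)
  also have "distr PP borel (\<lambda>f. fst (f i)) = distr (distr PP P (\<lambda>f. f i)) borel fst"
    using distr_distr[OF mfst mi] by (simp add: comp_def)
  also have "distr PP P (\<lambda>f. f i) = P"
    unfolding PP_def by (rule distr_PiM_component) (use P i in auto)
  finally have "distr (sample_law n P) borel (\<lambda>\<omega>. fst (fst \<omega> i)) = marginal P"
    by (simp add: marginal_def)
  then have "measure (marginal P) U = measure (sample_law n P) ((\<lambda>\<omega>. fst (fst \<omega> i)) -` U \<inter> space (sample_law n P))"
    using measure_distr[OF mX U] by simp
  then show ?thesis by (auto simp: vimage_def Int_def intro!: arg_cong[where f="measure _"])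
qed

lemma coupling:
  fixes P :: "('a::euclidean_space \<times> real) measure"
  assumes P: "prob_space P" and sP: "sets P = sets borel" and T: "T \<in> measurable borel borel"
    and U: "U \<in> sets borel" and fixT: "\<And>z. fst z \<notin> U \<Longrightarrow> T z = z"
    and G: "G \<in> sets (outcome_space n)"
  shows "measure (sample_law n (distr P borel T)) G \<le> measure (sample_law n P) G + real n * measure (marginal P) U"
proof -
  define Q where "Q = sample_law n P"
  define F where "F = (\<lambda>\<omega>::'a outcome. (compose {..<n} T (fst \<omega>), snd \<omega>))"
  interpret Q: prob_space Q unfolding Q_def by (rule sample_prob[OF P])
  have sQ: "sets Q = sets (outcome_space n)" unfolding Q_def by (rule sets_sample[OF sP])
  have spQ: "space Q = space (outcome_space n)" unfolding Q_def by (rule space_sample[OF sP])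
  have TP: "T \<in> measurable P borel"
    by (subst measurable_cong_sets[OF sP refl]) (rule T)
  have mc: "compose {..<n} T \<in> measurable (PiM {..<n} (\<lambda>_. P)) (PiM {..<n} (\<lambda>_. borel))"
    unfolding compose_def
  proof (rule measurable_restrict)
    fix i assume i: "i \<in> {..<n}"
    show "(\<lambda>x. T (x i)) \<in> measurable (PiM {..<n} (\<lambda>_. P)) borel"
      using measurable_compose[OF measurable_component_singleton[OF i, of "\<lambda>_. P"] TP] by simp
  qed
  have mF: "F \<in> measurable Q (outcome_space n)"
    unfolding Q_def sample_law_def outcome_space_def F_def
    by (rule measurable_Pair) (auto intro!: measurable_compose[OF measurable_fst mc] measurable_snd')
  have GQ: "G \<in> sets Q" using G sQ by simp
  define Bad where "Bad = (\<Union>i\<in>{..<n}. {\<omega> \<in> space Q. fst (fst \<omega> i) \<in> U})"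
  have mBi: "{\<omega> \<in> space Q. fst (fst \<omega> i) \<in> U} \<in> sets Q" if "i < n" for i
  proof -
    have "{\<omega> \<in> space Q. fst (fst \<omega> i) \<in> U} = (\<lambda>\<omega>. fst (fst \<omega> i)) -` U \<inter> space Q" by auto
    moreover have "(\<lambda>\<omega>. fst (fst \<omega> i)) \<in> measurable Q borel"
    proof -
      have mfst: "fst \<in> measurable P borel"
        by (subst measurable_cong_sets[OF sP refl]) (rule borel_measurable_continuous_onI, intro continuous_intros)
      have "fst \<in> measurable Q (PiM {..<n} (\<lambda>_. P))" unfolding Q_def sample_law_def by (rule measurable_fst)
      moreover have "(\<lambda>f. f i) \<in> measurable (PiM {..<n} (\<lambda>_. P)) P"
        by (rule measurable_component_singleton) (use that in simp)
      ultimately show ?thesis using measurable_compose[OF _ measurable_compose[OF _ mfst]] by blast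
    qed
    ultimately show ?thesis using U by (simp add: measurable_sets)
  qed
  have BadQ: "Bad \<in> sets Q" unfolding Bad_def using mBi by auto
  have sub: "F -` G \<inter> space Q \<subseteq> G \<union> Bad"
  proof
    fix \<omega> assume w: "\<omega> \<in> F -` G \<inter> space Q"
    show "\<omega> \<in> G \<union> Bad"
    proof (cases "\<omega> \<in> Bad")
      case False
      have wsp: "\<omega> \<in> space Q" using w by simp
      hence "fst \<omega> \<in> space (PiM {..<n} (\<lambda>_. borel :: ('a \<times> real) measure))"
        unfolding spQ outcome_space_def by (auto simp: space_pair_measure)
      hence ext: "fst \<omega> \<in> extensional {..<n}" by (simp add: space_PiM PiE_iff)
      have "compose {..<n} T (fst \<omega>) = fst \<omega>"
      proof
        fix i show "compose {..<n} T (fst \<omega>) i = fst \<omega> i"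
        proof (cases "i < n")
          case True
          then have "fst (fst \<omega> i) \<notin> U" using False wsp by (auto simp: Bad_def)
          then show ?thesis using True fixT by (simp add: compose_def)
        next
          case False
          then show ?thesis using ext by (simp add: compose_def extensional_def)
        qed
      qed
      then have "F \<omega> = \<omega>" by (simp add: F_def)
      then show ?thesis using w by auto
    qed simp
  qed
  have "measure (sample_law n (distr P borel T)) G = measure (distr Q (outcome_space n) F) G"
    unfolding Q_def F_def using sample_law_distr[OF P sP T] by simp
  also have "\<dots> = measure Q (F -` G \<inter> space Q)" by (rule measure_distr[OF mF G])
  also have "\<dots> \<le> measure Q (G \<union> Bad)"
    by (rule Q.finite_measure_mono[OF sub]) (use GQ BadQ in auto)
  also have "\<dots> \<le> measure Q G + measure Q Bad" by (rule measure_Un_le[OF GQ BadQ])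
  also have "measure Q Bad \<le> (\<Sum>i\<in>{..<n}. measure Q {\<omega> \<in> space Q. fst (fst \<omega> i) \<in> U})"
    unfolding Bad_def by (rule Q.finite_measure_subadditive_finite) (use mBi in auto)
  also have "\<dots> = (\<Sum>i\<in>{..<n}. measure (marginal P) U)"
    by (rule sum.cong) (auto simp: Q_def comp_measure[OF P sP U])
  also have "\<dots> = real n * measure (marginal P) U" by simp
  finally show ?thesis by (simp add: Q_def)
qed



lemma mem_meas:
  assumes "Ah \<in> selection_sets n \<A>"
  shows "{\<omega> \<in> space (outcome_space n). s \<in> Ah \<omega>} \<in> sets (outcome_space n)"
proof -
  have f: "(\<lambda>(x, \<omega>). x \<in> Ah \<omega>) \<in> measurable ((borel :: 'a measure) \<Otimes>\<^sub>M outcome_space n) (count_space UNIV)"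
    using assms by (simp add: selection_sets_def)
  have g: "(\<lambda>\<omega>. (s, \<omega>)) \<in> measurable (outcome_space n) ((borel :: 'a measure) \<Otimes>\<^sub>M outcome_space n)"
    by (rule measurable_Pair) auto
  have "(\<lambda>\<omega>. s \<in> Ah \<omega>) \<in> measurable (outcome_space n) (count_space UNIV)"
    using measurable_compose[OF g f] by simp
  then have "(\<lambda>\<omega>. s \<in> Ah \<omega>) -` {True} \<inter> space (outcome_space n) \<in> sets (outcome_space n)"
    by (rule measurable_sets) simp
  moreover have "(\<lambda>\<omega>. s \<in> Ah \<omega>) -` {True} \<inter> space (outcome_space n) = {\<omega> \<in> space (outcome_space n). s \<in> Ah \<omega>}"
    by auto
  ultimately show ?thesis by simp
qed

lemma avoid_meas:
  assumes "Ah \<in> selection_sets n \<A>" "finite S"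
  shows "{\<omega> \<in> space (outcome_space n). Ah \<omega> \<inter> S = {}} \<in> sets (outcome_space n)"
proof -
  have "{\<omega> \<in> space (outcome_space n). \<forall>s\<in>S. \<not> s \<in> Ah \<omega>} \<in> sets (outcome_space n)"
  proof (rule sets.sets_Collect_finite_All[OF _ assms(2)])
    fix s assume "s \<in> S"
    have "{\<omega> \<in> space (outcome_space n). \<not> s \<in> Ah \<omega>} = space (outcome_space n) - {\<omega> \<in> space (outcome_space n). s \<in> Ah \<omega>}"
      by auto
    then show "{\<omega> \<in> space (outcome_space n). \<not> s \<in> Ah \<omega>} \<in> sets (outcome_space n)"
      using mem_meas[OF assms(1)] by auto
  qed
  moreover have "{\<omega> \<in> space (outcome_space n). \<forall>s\<in>S. \<not> s \<in> Ah \<omega>} = {\<omega> \<in> space (outcome_space n). Ah \<omega> \<inter> S = {}}"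
    by auto
  ultimately show ?thesis by simp
qed

lemma core_r:
  fixes \<mu> :: "'a::euclidean_space measure"
  assumes tau: "0 < \<tau>"
    and Ah: "Ah \<in> Ahat n \<tau> \<alpha> \<A> (P_Lip \<mu>)" and PL: "(P, eta) \<in> P_Lip \<mu>" and S: "finite S"
    and r: "0 < r"
  shows "1 - \<alpha> - real n * measure \<mu> {x. infdist x S < r} \<le>
    measure (sample_law n P) (cover_event n Ah eta \<tau> \<inter> {\<omega> \<in> space (sample_law n P). Ah \<omega> \<inter> S = {}})"
proof -
  have D: "is_distribution P" and mP: "marginal P = \<mu>"
    using PL by (auto simp: P_Lip_def)
  have Pp: "prob_space P" and sP: "sets P = sets borel" using D by (auto simp: is_distribution_def)
  have sel: "Ah \<in> selection_sets n \<A>" using Ah by (simp add: Ahat_def)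
  have cov: "\<And>P' eta'. (P', eta') \<in> P_Lip \<mu> \<Longrightarrow> cover_event n Ah eta' \<tau> \<in> sets (sample_law n P') \<and>
      1 - \<alpha> \<le> measure (sample_law n P') (cover_event n Ah eta' \<tau>)"
    using Ah by (auto simp: Ahat_def)
  define Q where "Q = sample_law n P"
  interpret Q: prob_space Q unfolding Q_def by (rule sample_prob[OF Pp])
  have sQ: "sets Q = sets (outcome_space n)" unfolding Q_def by (rule sets_sample[OF sP])
  have spQ: "space Q = space (outcome_space n)" unfolding Q_def by (rule space_sample[OF sP])
  define h where "h = (\<lambda>x::'a. min 1 (infdist x S / r))"
  have hc: "continuous_on UNIV h" unfolding h_def by (intro continuous_intros) (use r in auto)
  have hL: "(1/r)-lipschitz_on UNIV h"
  proof (rule lipschitz_onI)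
    fix x y :: 'a
    have "\<bar>h x - h y\<bar> \<le> \<bar>infdist x S / r - infdist y S / r\<bar>" unfolding h_def by linarith
    also have "\<dots> = \<bar>infdist x S - infdist y S\<bar> / r" using r by (simp add: diff_divide_distrib[symmetric] abs_divide)
    also have "\<dots> \<le> dist x y / r" using infdist_triangle_abs[of x S y] r by (simp add: divide_right_mono)
    finally show "dist (h x) (h y) \<le> 1 / r * dist x y" by (simp add: dist_real_def)
  qed (use r in simp)
  have h01: "\<And>x. 0 \<le> h x \<and> h x \<le> 1" unfolding h_def using r by (auto simp: infdist_nonneg)
  define T where "T = (\<lambda>z::'a \<times> real. (fst z, h (fst z) * snd z))"
  have Tm: "T \<in> measurable borel borel" unfolding T_def
    by (rule borel_measurable_continuous_onI) (intro continuous_intros continuous_on_compose2[OF hc], auto)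
  define eta' where "eta' = (\<lambda>x. h x * clamp (eta x))"
  have PL': "(distr P borel T, eta') \<in> P_Lip \<mu>"
    unfolding T_def eta'_def by (rule perturb[OF PL hc hL h01])
  define Cr where "Cr = cover_event n Ah eta' \<tau>"
  have Crs: "Cr \<in> sets (sample_law n (distr P borel T))" and Crm: "1 - \<alpha> \<le> measure (sample_law n (distr P borel T)) Cr"
    using cov[OF PL'] by (auto simp: Cr_def)
  have sP': "sets (distr P borel T) = sets borel" by simp
  have Cro: "Cr \<in> sets (outcome_space n)" using Crs sets_sample[OF sP'] by simp
  define U where "U = {x. infdist x S < r}"
  have idm: "(\<lambda>x. infdist x S) \<in> borel_measurable (borel :: 'a measure)"
    by (rule borel_measurable_continuous_onI) (intro continuous_intros)
  have Um: "U \<in> sets borel" unfolding U_def using idm by measurable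
  have fixT: "T z = z" if "fst z \<notin> U" for z
  proof -
    have "infdist (fst z) S \<ge> r" using that by (simp add: U_def)
    hence "h (fst z) = 1" unfolding h_def using r by simp
    thus ?thesis by (simp add: T_def)
  qed
  have "measure (sample_law n (distr P borel T)) Cr \<le> measure Q Cr + real n * measure (marginal P) U"
    unfolding Q_def by (rule coupling[OF Pp sP Tm Um fixT Cro])
  hence c1: "1 - \<alpha> - real n * measure \<mu> U \<le> measure Q Cr" using Crm mP by simp
  define C where "C = cover_event n Ah eta \<tau>"
  define DS where "DS = {\<omega> \<in> space Q. Ah \<omega> \<inter> S = {}}"
  have Cs: "C \<in> sets Q" using cov[OF PL] by (simp add: C_def Q_def)
  have DSs: "DS \<in> sets Q" using avoid_meas[OF sel S] by (simp add: DS_def sQ spQ)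
  have sub: "Cr \<subseteq> C \<inter> DS"
  proof
    fix \<omega> assume w: "\<omega> \<in> Cr"
    hence wsp: "\<omega> \<in> space (outcome_space n)" and inc: "Ah \<omega> \<subseteq> superlevel eta' \<tau>"
      by (auto simp: Cr_def cover_event_def)
    have "Ah \<omega> \<subseteq> superlevel eta \<tau>"
    proof
      fix x assume "x \<in> Ah \<omega>"
      hence "\<tau> \<le> h x * clamp (eta x)" using inc by (auto simp: superlevel_def eta'_def)
      also have "\<dots> \<le> clamp (eta x)" using h01[of x] clamp_bounds[of "eta x"] by (simp add: mult_left_le_one_le)
      finally have "\<tau> \<le> clamp (eta x)" .
      thus "x \<in> superlevel eta \<tau>" using tau by (auto simp: clamp_def superlevel_def)
    qed
    moreover have "Ah \<omega> \<inter> S = {}"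
    proof (rule ccontr)
      assume "Ah \<omega> \<inter> S \<noteq> {}"
      then obtain x where x: "x \<in> Ah \<omega>" "x \<in> S" by auto
      hence "h x = 0" by (simp add: h_def)
      hence "eta' x = 0" by (simp add: eta'_def)
      moreover have "eta' x \<ge> \<tau>" using x inc by (auto simp: superlevel_def)
      ultimately show False using tau by simp
    qed
    ultimately show "\<omega> \<in> C \<inter> DS" using wsp by (simp add: C_def DS_def cover_event_def spQ)
  qed
  have "measure Q Cr \<le> measure Q (C \<inter> DS)"
    by (rule Q.finite_measure_mono[OF sub]) (use Cs DSs in auto)
  with c1 show ?thesis by (simp add: C_def DS_def Q_def U_def)
qed



lemma coreA:
  fixes \<mu> :: "'a::euclidean_space measure"
  assumes tau: "0 < \<tau>" and mu: "prob_space \<mu>" "sets \<mu> = sets borel" "\<forall>x. measure \<mu> {x} = 0"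
    and Ah: "Ah \<in> Ahat n \<tau> \<alpha> \<A> (P_Lip \<mu>)" and PL: "(P, eta) \<in> P_Lip \<mu>" and S: "finite S"
  shows "1 - \<alpha> \<le>
    measure (sample_law n P) (cover_event n Ah eta \<tau> \<inter> {\<omega> \<in> space (sample_law n P). Ah \<omega> \<inter> S = {}})"
    (is "_ \<le> ?X")
proof (cases "S = {}")
  case True
  have D: "is_distribution P" using PL by (auto simp: P_Lip_def)
  have sP: "sets P = sets borel" using D by (auto simp: is_distribution_def)
  have "cover_event n Ah eta \<tau> \<subseteq> space (sample_law n P)"
    by (auto simp: cover_event_def space_sample[OF sP])
  hence "?X = measure (sample_law n P) (cover_event n Ah eta \<tau>)" using True by (simp add: Int_absorb2)
  moreover have "1 - \<alpha> \<le> measure (sample_law n P) (cover_event n Ah eta \<tau>)"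
    using Ah PL by (auto simp: Ahat_def)
  ultimately show ?thesis by simp
next
  case False
  interpret M: prob_space \<mu> by (rule mu(1))
  define Um where "Um = (\<lambda>m::nat. {x::'a. infdist x S < 1 / real (Suc m)})"
  have bound: "1 - \<alpha> - real n * measure \<mu> (Um m) \<le> ?X" for m
    unfolding Um_def by (rule core_r[OF tau Ah PL S]) simp
  have idm: "(\<lambda>x. infdist x S) \<in> borel_measurable (borel :: 'a measure)"
    by (rule borel_measurable_continuous_onI) (intro continuous_intros)
  have Ums: "range Um \<subseteq> sets \<mu>"
  proof -
    have "Um m \<in> sets borel" for m unfolding Um_def using idm by measurable
    thus ?thesis using mu(2) by auto
  qed
  have dec: "decseq Um"
  proof (rule decseq_SucI)
    fix m show "Um (Suc m) \<subseteq> Um m"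
      unfolding Um_def by (auto simp: frac_le elim!: less_le_trans)
  qed
  have inter: "(\<Inter>m. Um m) = S"
  proof
    show "S \<subseteq> (\<Inter>m. Um m)" by (auto simp: Um_def)
    show "(\<Inter>m. Um m) \<subseteq> S"
    proof
      fix x assume x: "x \<in> (\<Inter>m. Um m)"
      have "infdist x S = 0"
      proof (rule ccontr)
        assume "infdist x S \<noteq> 0"
        hence "infdist x S > 0" using infdist_nonneg[of x S] by simp
        then obtain m where "inverse (real (Suc m)) < infdist x S"
          using reals_Archimedean by blast
        moreover have "infdist x S < 1 / real (Suc m)" using x by (auto simp: Um_def)
        ultimately show False by (simp add: inverse_eq_divide)
      qed
      hence "x \<in> closure S" using in_closure_iff_infdist_zero[OF False] by simp
      thus "x \<in> S" using finite_imp_closed[OF S] by (simp add: closure_closed)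
    qed
  qed
  have lim: "(\<lambda>m. measure \<mu> (Um m)) \<longlonglongrightarrow> measure \<mu> S"
    using M.finite_Lim_measure_decseq[OF Ums dec] inter by simp
  have mS: "measure \<mu> S = 0"
  proof -
    have "measure \<mu> (\<Union>s\<in>S. {s}) \<le> (\<Sum>s\<in>S. measure \<mu> {s})"
      by (rule measure_UNION_le[OF S]) (simp add: mu(2))
    hence "measure \<mu> S \<le> 0" using mu(3) by simp
    thus ?thesis using measure_nonneg[of \<mu> S] by simp
  qed
  have "(\<lambda>m. 1 - \<alpha> - real n * measure \<mu> (Um m)) \<longlonglongrightarrow> 1 - \<alpha> - real n * 0"
    using lim mS by (intro tendsto_intros) simp
  hence "(\<lambda>m. 1 - \<alpha> - real n * measure \<mu> (Um m)) \<longlonglongrightarrow> 1 - \<alpha>" by simp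
  thus ?thesis by (rule LIMSEQ_le_const2) (use bound in auto)
qed



lemma inf_pow0:
  fixes r :: real assumes r: "0 \<le> r" "r < 1"
  shows "(INF k. ennreal r ^ k) = 0"
proof -
  have dec: "decseq (\<lambda>k. ennreal r ^ k)"
  proof (rule decseq_SucI)
    fix k
    have "ennreal r ^ Suc k = ennreal r ^ k * ennreal r" by (rule power_Suc2)
    also have "\<dots> \<le> ennreal r ^ k * 1" by (rule mult_left_mono) (use r in auto)
    finally show "ennreal r ^ Suc k \<le> ennreal r ^ k" by simp
  qed
  have l1: "(\<lambda>k. ennreal r ^ k) \<longlonglongrightarrow> (INF k. ennreal r ^ k)" by (rule LIMSEQ_INF[OF dec])
  have "(\<lambda>k. ennreal (r ^ k)) \<longlonglongrightarrow> ennreal 0"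
    by (rule tendsto_ennrealI, rule LIMSEQ_power_zero) (use r in simp)
  hence l2: "(\<lambda>k. ennreal r ^ k) \<longlonglongrightarrow> 0" using r by (simp add: ennreal_power)
  show ?thesis using LIMSEQ_unique[OF l1 l2] .
qed

context
  fixes \<mu> :: "'a::euclidean_space measure" and \<A> :: "'a set set" and Ah :: "'a outcome \<Rightarrow> 'a set"
    and n :: nat and \<tau> \<alpha> :: real and P :: "('a \<times> real) measure" and eta :: "'a \<Rightarrow> real"
  assumes tau: "0 < \<tau>" and mu: "prob_space \<mu>" "sets \<mu> = sets borel" "\<forall>x. measure \<mu> {x} = 0"
    and AA: "\<A> \<subseteq> sets borel" and Ah: "Ah \<in> Ahat n \<tau> \<alpha> \<A> (P_Lip \<mu>)" and PL: "(P, eta) \<in> P_Lip \<mu>"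
begin

lemma main_E:
  shows "{\<omega> \<in> space (sample_law n P). measure \<mu> (Ah \<omega>) = 0} \<in> sets (sample_law n P)"
    and "1 - \<alpha> \<le> measure (sample_law n P) ({\<omega> \<in> space (sample_law n P). measure \<mu> (Ah \<omega>) = 0} \<inter> cover_event n Ah eta \<tau>)"
proof -
  have D: "is_distribution P" using PL by (auto simp: P_Lip_def)
  have Pp: "prob_space P" and sP: "sets P = sets borel" using D by (auto simp: is_distribution_def)
  have sel: "Ah \<in> selection_sets n \<A>" using Ah by (simp add: Ahat_def)
  define Q where "Q = sample_law n P"
  interpret Q: prob_space Q unfolding Q_def by (rule sample_prob[OF Pp])
  interpret M: prob_space \<mu> by (rule mu(1))
  interpret QM: pair_sigma_finite Q \<mu> ..
  have sQ: "sets Q = sets (outcome_space n)" unfolding Q_def by (rule sets_sample[OF sP])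
  have spQ: "space Q = space (outcome_space n)" unfolding Q_def by (rule space_sample[OF sP])
  have spM: "space \<mu> = UNIV" using sets_eq_imp_space_eq[OF mu(2)] by simp
  have AhS: "Ah \<omega> \<in> sets \<mu>" if "\<omega> \<in> space Q" for \<omega>
    using sel that AA mu(2) by (auto simp: selection_sets_def spQ)
  define C where "C = cover_event n Ah eta \<tau>"
  have Cs: "C \<in> sets Q" using Ah PL by (auto simp: Ahat_def C_def Q_def)
  have CQ: "C \<subseteq> space Q" by (auto simp: C_def cover_event_def spQ)
  define DS where "DS = (\<lambda>S. {\<omega> \<in> space Q. Ah \<omega> \<inter> S = {}})"
  have DSs: "finite S \<Longrightarrow> DS S \<in> sets Q" for S
    using avoid_meas[OF sel] by (simp add: DS_def sQ spQ)
  define Zc where "Zc = {p \<in> space (Q \<Otimes>\<^sub>M \<mu>). snd p \<notin> Ah (fst p)}"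
  have Zcm: "Zc \<in> sets (Q \<Otimes>\<^sub>M \<mu>)"
  proof -
    have J: "(\<lambda>(x, \<omega>). x \<in> Ah \<omega>) \<in> measurable ((borel :: 'a measure) \<Otimes>\<^sub>M outcome_space n) (count_space UNIV)"
      using sel by (simp add: selection_sets_def)
    have m1: "snd \<in> measurable (Q \<Otimes>\<^sub>M \<mu>) (borel :: 'a measure)"
      by (subst measurable_cong_sets[OF refl mu(2)[symmetric]]) (rule measurable_snd)
    have m2: "fst \<in> measurable (Q \<Otimes>\<^sub>M \<mu>) (outcome_space n)"
      by (subst measurable_cong_sets[OF refl sQ[symmetric]]) (rule measurable_fst)
    have sw: "(\<lambda>p. (snd p, fst p)) \<in> measurable (Q \<Otimes>\<^sub>M \<mu>) ((borel :: 'a measure) \<Otimes>\<^sub>M outcome_space n)"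
      by (rule measurable_Pair[OF m1 m2])
    have "(\<lambda>p. snd p \<in> Ah (fst p)) \<in> measurable (Q \<Otimes>\<^sub>M \<mu>) (count_space UNIV)"
      using measurable_compose[OF sw J] by simp
    then have "(\<lambda>p. snd p \<in> Ah (fst p)) -` {False} \<inter> space (Q \<Otimes>\<^sub>M \<mu>) \<in> sets (Q \<Otimes>\<^sub>M \<mu>)"
      by (rule measurable_sets) simp
    moreover have "(\<lambda>p. snd p \<in> Ah (fst p)) -` {False} \<inter> space (Q \<Otimes>\<^sub>M \<mu>) = Zc"
      by (auto simp: Zc_def)
    ultimately show ?thesis by simp
  qed
  define e where "e = (\<lambda>\<omega>. emeasure \<mu> (Pair \<omega> -` Zc))"
  have em[measurable]: "e \<in> borel_measurable Q" unfolding e_def by (rule QM.measurable_emeasure_Pair1[OF Zcm])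
  have Zc_sec: "Pair \<omega> -` Zc = space \<mu> - Ah \<omega>" if "\<omega> \<in> space Q" for \<omega>
    using that by (auto simp: Zc_def space_pair_measure spM)
  have e_real: "e \<omega> = ennreal (1 - measure \<mu> (Ah \<omega>))" if "\<omega> \<in> space Q" for \<omega>
  proof -
    have "e \<omega> = emeasure \<mu> (space \<mu> - Ah \<omega>)" using Zc_sec[OF that] by (simp add: e_def)
    also have "\<dots> = ennreal (measure \<mu> (space \<mu> - Ah \<omega>))" by (simp add: M.emeasure_eq_measure)
    also have "\<dots> = ennreal (1 - measure \<mu> (Ah \<omega>))" using M.prob_compl[OF AhS[OF that]] by simp
    finally show ?thesis .
  qed
  have e_le: "e \<omega> \<le> 1" if "\<omega> \<in> space Q" for \<omega>
    using e_real[OF that] measure_nonneg[of \<mu> "Ah \<omega>"] by simp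
  have Zc_ind: "indicator Zc (\<omega>, x) = (indicator (space \<mu> - Ah \<omega>) x :: ennreal)" if "\<omega> \<in> space Q" for \<omega> x
    using Zc_sec[OF that] by (auto simp: indicator_def)
  have ind: "\<forall>S. finite S \<longrightarrow> ennreal (1 - \<alpha>) \<le> (\<integral>\<^sup>+\<omega>. indicator (C \<inter> DS S) \<omega> * e \<omega> ^ k \<partial>Q)" for k
  proof (induction k)
    case 0
    show ?case
    proof (intro allI impI)
      fix S :: "'a set" assume S: "finite S"
      have "1 - \<alpha> \<le> measure Q (C \<inter> DS S)"
        using coreA[OF tau mu Ah PL S] by (simp add: Q_def C_def DS_def)
      hence "ennreal (1 - \<alpha>) \<le> emeasure Q (C \<inter> DS S)" by (simp add: Q.emeasure_eq_measure)
      also have "emeasure Q (C \<inter> DS S) = (\<integral>\<^sup>+\<omega>. indicator (C \<inter> DS S) \<omega> \<partial>Q)"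
        using Cs DSs[OF S] by simp
      finally show "ennreal (1 - \<alpha>) \<le> (\<integral>\<^sup>+\<omega>. indicator (C \<inter> DS S) \<omega> * e \<omega> ^ 0 \<partial>Q)" by simp
    qed
  next
    case (Suc k)
    show ?case
    proof (intro allI impI)
      fix S :: "'a set" assume S: "finite S"
      have CDs[measurable]: "C \<inter> DS S \<in> sets Q" using Cs DSs[OF S] by auto
      define f where "f = (\<lambda>p::'a outcome \<times> 'a. indicator (C \<inter> DS S) (fst p) * e (fst p) ^ k * indicator Zc p :: ennreal)"
      have fm: "f \<in> borel_measurable (Q \<Otimes>\<^sub>M \<mu>)" unfolding f_def using Zcm by measurable
      have "(\<integral>\<^sup>+\<omega>. indicator (C \<inter> DS S) \<omega> * e \<omega> ^ Suc k \<partial>Q) = (\<integral>\<^sup>+\<omega>. (\<integral>\<^sup>+x. f (\<omega>, x) \<partial>\<mu>) \<partial>Q)"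
      proof (rule nn_integral_cong)
        fix \<omega> assume w: "\<omega> \<in> space Q"
        have "(\<integral>\<^sup>+x. f (\<omega>, x) \<partial>\<mu>) = (\<integral>\<^sup>+x. indicator (C \<inter> DS S) \<omega> * e \<omega> ^ k * indicator (space \<mu> - Ah \<omega>) x \<partial>\<mu>)"
          by (rule nn_integral_cong) (simp add: f_def Zc_ind[OF w])
        also have "\<dots> = indicator (C \<inter> DS S) \<omega> * e \<omega> ^ k * emeasure \<mu> (space \<mu> - Ah \<omega>)"
          using AhS[OF w] by (simp add: nn_integral_cmult_indicator)
        also have "emeasure \<mu> (space \<mu> - Ah \<omega>) = e \<omega>" using Zc_sec[OF w] by (simp add: e_def)
        finally show "indicator (C \<inter> DS S) \<omega> * e \<omega> ^ Suc k = (\<integral>\<^sup>+x. f (\<omega>, x) \<partial>\<mu>)"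
          by (simp add: mult_ac)
      qed
      also have "\<dots> = (\<integral>\<^sup>+x. (\<integral>\<^sup>+\<omega>. f (\<omega>, x) \<partial>Q) \<partial>\<mu>)" by (rule QM.Fubini[OF fm, symmetric])
      also have "\<dots> \<ge> (\<integral>\<^sup>+x. ennreal (1 - \<alpha>) \<partial>\<mu>)"
      proof (rule nn_integral_mono)
        fix x assume "x \<in> space \<mu>"
        have "(\<integral>\<^sup>+\<omega>. f (\<omega>, x) \<partial>Q) = (\<integral>\<^sup>+\<omega>. indicator (C \<inter> DS (insert x S)) \<omega> * e \<omega> ^ k \<partial>Q)"
        proof (rule nn_integral_cong)
          fix \<omega> assume w: "\<omega> \<in> space Q"
          have zi: "indicator Zc (\<omega>, x) = (indicator (space \<mu> - Ah \<omega>) x :: ennreal)" by (rule Zc_ind[OF w])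
          show "f (\<omega>, x) = indicator (C \<inter> DS (insert x S)) \<omega> * e \<omega> ^ k"
            unfolding f_def fst_conv zi using w by (auto simp: DS_def indicator_def spM)
        qed
        also have "\<dots> \<ge> ennreal (1 - \<alpha>)" using Suc.IH S by simp
        finally show "ennreal (1 - \<alpha>) \<le> (\<integral>\<^sup>+\<omega>. f (\<omega>, x) \<partial>Q)" .
      qed
      also have "(\<integral>\<^sup>+x. ennreal (1 - \<alpha>) \<partial>\<mu>) = ennreal (1 - \<alpha>)" by (simp add: M.emeasure_space_1)
      finally show "ennreal (1 - \<alpha>) \<le> (\<integral>\<^sup>+\<omega>. indicator (C \<inter> DS S) \<omega> * e \<omega> ^ Suc k \<partial>Q)" .
    qed
  qed
  define E where "E = {\<omega> \<in> space Q. measure \<mu> (Ah \<omega>) = 0}"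
  have E_alt: "E = e -` {1} \<inter> space Q"
  proof -
    have "measure \<mu> (Ah \<omega>) = 0 \<longleftrightarrow> e \<omega> = 1" if "\<omega> \<in> space Q" for \<omega>
      using e_real[OF that] measure_nonneg[of \<mu> "Ah \<omega>"] by auto
    thus ?thesis by (auto simp: E_def)
  qed
  have Es: "E \<in> sets Q" unfolding E_alt by (rule measurable_sets[OF em]) simp
  have DS0: "DS {} = space Q" by (simp add: DS_def)
  have CD0: "C \<inter> DS {} = C" using CQ DS0 by auto
  define g where "g = (\<lambda>k \<omega>. indicator C \<omega> * e \<omega> ^ k :: ennreal)"
  have gdec: "decseq g"
  proof (rule decseq_SucI, rule le_funI)
    fix k \<omega>
    show "g (Suc k) \<omega> \<le> g k \<omega>"
    proof (cases "\<omega> \<in> C")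
      case True
      hence "\<omega> \<in> space Q" using CQ by blast
      hence "e \<omega> \<le> 1" by (rule e_le)
      hence "e \<omega> ^ k * e \<omega> \<le> e \<omega> ^ k * 1" by (intro mult_left_mono) auto
      hence "e \<omega> ^ Suc k \<le> e \<omega> ^ k" by (simp add: mult_ac)
      thus ?thesis by (simp add: g_def mult_left_mono)
    qed (simp add: g_def)
  qed
  have gm: "g k \<in> borel_measurable Q" for k unfolding g_def using Cs by measurable
  have gfin: "(\<integral>\<^sup>+\<omega>. g k \<omega> \<partial>Q) < \<infinity>" for k
  proof -
    have "(\<integral>\<^sup>+\<omega>. g k \<omega> \<partial>Q) \<le> (\<integral>\<^sup>+\<omega>. 1 \<partial>Q)"
    proof (rule nn_integral_mono)
      fix \<omega> assume w: "\<omega> \<in> space Q"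
      have "e \<omega> ^ k \<le> 1" using e_le[OF w] by (simp add: power_le_one)
      thus "g k \<omega> \<le> 1" by (auto simp: g_def indicator_def)
    qed
    also have "\<dots> = 1" by (simp add: Q.emeasure_space_1)
    finally show ?thesis by (rule le_less_trans) simp
  qed
  have ginf: "(INF k. g k \<omega>) = indicator (E \<inter> C) \<omega>" for \<omega>
  proof (cases "\<omega> \<in> C")
    case False thus ?thesis by (simp add: g_def)
  next
    case True
    hence w: "\<omega> \<in> space Q" using CQ by auto
    show ?thesis
    proof (cases "measure \<mu> (Ah \<omega>) = 0")
      case True
      hence "e \<omega> = 1" using e_real[OF w] by simp
      thus ?thesis using True \<open>\<omega> \<in> C\<close> w by (simp add: g_def E_def)
    next
      case False
      have pos: "0 < measure \<mu> (Ah \<omega>)" using False measure_nonneg[of \<mu> "Ah \<omega>"] by linarith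
      have le1: "measure \<mu> (Ah \<omega>) \<le> 1" by (rule M.prob_le_1)
      have "(INF k. g k \<omega>) = (INF k. ennreal (1 - measure \<mu> (Ah \<omega>)) ^ k)"
        using \<open>\<omega> \<in> C\<close> e_real[OF w] by (simp add: g_def)
      also have "\<dots> = 0" by (rule inf_pow0) (use pos le1 in auto)
      finally show ?thesis using False by (simp add: E_def)
    qed
  qed
  have "(\<integral>\<^sup>+\<omega>. (INF k. g k \<omega>) \<partial>Q) = (INF k. (\<integral>\<^sup>+\<omega>. g k \<omega> \<partial>Q))"
    by (rule nn_integral_monotone_convergence_INF_decseq[OF gdec gm gfin])
  moreover have "ennreal (1 - \<alpha>) \<le> (INF k. (\<integral>\<^sup>+\<omega>. g k \<omega> \<partial>Q))"
  proof (rule INF_greatest)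
    fix k
    show "ennreal (1 - \<alpha>) \<le> (\<integral>\<^sup>+\<omega>. g k \<omega> \<partial>Q)"
      using ind[of k, rule_format, of "{}"] unfolding CD0 g_def by simp
  qed
  ultimately have "ennreal (1 - \<alpha>) \<le> (\<integral>\<^sup>+\<omega>. indicator (E \<inter> C) \<omega> \<partial>Q)" by (simp add: ginf)
  also have "\<dots> = emeasure Q (E \<inter> C)" using Es Cs by simp
  also have "\<dots> = ennreal (measure Q (E \<inter> C))" by (simp add: Q.emeasure_eq_measure)
  finally have "1 - \<alpha> \<le> measure Q (E \<inter> C)" by simp
  then show "1 - \<alpha> \<le> measure (sample_law n P) ({\<omega> \<in> space (sample_law n P). measure \<mu> (Ah \<omega>) = 0} \<inter> cover_event n Ah eta \<tau>)"
    by (simp add: Q_def E_def C_def)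
  show "{\<omega> \<in> space (sample_law n P). measure \<mu> (Ah \<omega>) = 0} \<in> sets (sample_law n P)"
    using Es by (simp add: Q_def E_def)
qed

end



lemma M_props:
  assumes mp: "prob_space (marginal P)" and e: "{} \<in> \<A>"
  shows "0 \<le> M_tau \<tau> P eta \<A>"
    and "\<And>A. A \<in> \<A> \<Longrightarrow> A \<subseteq> superlevel eta \<tau> \<Longrightarrow> measure (marginal P) A \<le> M_tau \<tau> P eta \<A>"
    and "\<And>\<epsilon>. 0 < \<epsilon> \<Longrightarrow> \<exists>A\<in>\<A>. A \<subseteq> superlevel eta \<tau> \<and> M_tau \<tau> P eta \<A> - \<epsilon> < measure (marginal P) A"
proof -
  interpret M: prob_space "marginal P" by (rule mp)
  define SS where "SS = {measure (marginal P) A | A. A \<in> \<A> \<and> A \<subseteq> superlevel eta \<tau>}"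
  have Mdef: "M_tau \<tau> P eta \<A> = Sup SS" by (simp add: M_tau_def SS_def)
  have bdd: "bdd_above SS" unfolding SS_def by (rule bdd_aboveI[where M=1]) (auto intro: M.prob_le_1)
  have ne: "0 \<in> SS" unfolding SS_def using e by force
  show "0 \<le> M_tau \<tau> P eta \<A>" unfolding Mdef by (rule cSup_upper[OF ne bdd])
  show "\<And>A. A \<in> \<A> \<Longrightarrow> A \<subseteq> superlevel eta \<tau> \<Longrightarrow> measure (marginal P) A \<le> M_tau \<tau> P eta \<A>"
    unfolding Mdef by (rule cSup_upper[OF _ bdd]) (auto simp: SS_def)
  show "\<exists>A\<in>\<A>. A \<subseteq> superlevel eta \<tau> \<and> M_tau \<tau> P eta \<A> - \<epsilon> < measure (marginal P) A" if "0 < \<epsilon>" for \<epsilon>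
  proof -
    have "Sup SS - \<epsilon> < Sup SS" using that by simp
    then obtain s where "s \<in> SS" "Sup SS - \<epsilon> < s" using less_cSupE[of "Sup SS - \<epsilon>" SS] ne by blast
    thus ?thesis unfolding Mdef SS_def by auto
  qed
qed

lemma regret_lb:
  fixes \<mu> :: "'a::euclidean_space measure"
  assumes tau: "0 < \<tau>" and a: "0 < \<alpha>" "\<alpha> < 1"
    and mu: "prob_space \<mu>" "sets \<mu> = sets borel" "\<forall>x. measure \<mu> {x} = 0"
    and AA: "\<A> \<subseteq> sets borel" "{} \<in> \<A>" and Ah: "Ah \<in> Ahat n \<tau> \<alpha> \<A> (P_Lip \<mu>)" and PL: "(P, eta) \<in> P_Lip \<mu>"
  shows "cond_prob (sample_law n P) {\<omega> \<in> space (sample_law n P). measure \<mu> (Ah \<omega>) = 0} (cover_event n Ah eta \<tau>)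
        \<ge> measure (sample_law n P) ({\<omega> \<in> space (sample_law n P). measure \<mu> (Ah \<omega>) = 0} \<inter> cover_event n Ah eta \<tau>)"
    and "measure (sample_law n P) ({\<omega> \<in> space (sample_law n P). measure \<mu> (Ah \<omega>) = 0} \<inter> cover_event n Ah eta \<tau>) \<ge> 1 - \<alpha>"
    and "regret n \<tau> Ah P eta \<A> \<ge> (1 - \<alpha>) * M_tau \<tau> P eta \<A>"
proof -
  have D: "is_distribution P" and mP: "marginal P = \<mu>" using PL by (auto simp: P_Lip_def)
  have Pp: "prob_space P" and sP: "sets P = sets borel" using D by (auto simp: is_distribution_def)
  have sel: "Ah \<in> selection_sets n \<A>" using Ah by (simp add: Ahat_def)
  define Q where "Q = sample_law n P"
  interpret Q: prob_space Q unfolding Q_def by (rule sample_prob[OF Pp])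
  have spQ: "space Q = space (outcome_space n)" unfolding Q_def by (rule space_sample[OF sP])
  define C where "C = cover_event n Ah eta \<tau>"
  define E where "E = {\<omega> \<in> space Q. measure \<mu> (Ah \<omega>) = 0}"
  have Cs: "C \<in> sets Q" using Ah PL by (auto simp: Ahat_def C_def Q_def)
  have Es: "E \<in> sets Q" using main_E(1)[OF tau mu AA(1) Ah PL] by (simp add: E_def Q_def)
  have x: "1 - \<alpha> \<le> measure Q (E \<inter> C)" using main_E(2)[OF tau mu AA(1) Ah PL] by (simp add: E_def Q_def C_def)
  have m_ge: "measure Q (E \<inter> C) \<le> measure Q C" by (rule Q.finite_measure_mono) (use Cs in auto)
  have m_le: "measure Q C \<le> 1" by (rule Q.prob_le_1)
  have mpos: "0 < measure Q C" using x m_ge a by linarith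
  show "cond_prob (sample_law n P) {\<omega> \<in> space (sample_law n P). measure \<mu> (Ah \<omega>) = 0} (cover_event n Ah eta \<tau>)
        \<ge> measure (sample_law n P) ({\<omega> \<in> space (sample_law n P). measure \<mu> (Ah \<omega>) = 0} \<inter> cover_event n Ah eta \<tau>)"
  proof -
    have "measure Q (E \<inter> C) * measure Q C \<le> measure Q (E \<inter> C) * 1"
      by (rule mult_left_mono[OF m_le]) simp
    hence "measure Q (E \<inter> C) \<le> measure Q (E \<inter> C) / measure Q C" using mpos by (simp add: le_divide_eq)
    thus ?thesis by (simp add: cond_prob_def Q_def E_def C_def)
  qed
  show "measure (sample_law n P) ({\<omega> \<in> space (sample_law n P). measure \<mu> (Ah \<omega>) = 0} \<inter> cover_event n Ah eta \<tau>) \<ge> 1 - \<alpha>"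
    using x by (simp add: E_def Q_def C_def)
  have mp: "prob_space (marginal P)" using mP mu by simp
  define M where "M = M_tau \<tau> P eta \<A>"
  have M0: "0 \<le> M" unfolding M_def by (rule M_props(1)[OF mp AA(2)])
  have Mub: "measure \<mu> A \<le> M" if "A \<in> \<A>" "A \<subseteq> superlevel eta \<tau>" for A
    using M_props(2)[OF mp AA(2) that] mP by (simp add: M_def)
  define I where "I = (\<integral>\<omega>. indicator C \<omega> * measure (marginal P) (Ah \<omega>) \<partial>Q)"
  have "I \<le> (\<integral>\<omega>. M * indicator (C - E) \<omega> \<partial>Q)"
    unfolding I_def
  proof (rule integral_mono')
    show "integrable Q (\<lambda>\<omega>. M * indicator (C - E) \<omega>)"
    proof (rule integrable_mult_right, rule integrable_real_indicator)
      show "C - E \<in> sets Q" using Cs Es by auto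
      show "emeasure Q (C - E) < \<infinity>" by (simp add: Q.emeasure_eq_measure)
    qed
    fix \<omega> assume w: "\<omega> \<in> space Q"
    show "0 \<le> M * indicator (C - E) \<omega>" using M0 by simp
    show "indicator C \<omega> * measure (marginal P) (Ah \<omega>) \<le> M * indicator (C - E) \<omega>"
    proof (cases "\<omega> \<in> C")
      case True
      have "Ah \<omega> \<in> \<A>" using sel w by (auto simp: selection_sets_def spQ)
      moreover have "Ah \<omega> \<subseteq> superlevel eta \<tau>" using True by (simp add: C_def cover_event_def)
      ultimately have "measure \<mu> (Ah \<omega>) \<le> M" by (rule Mub)
      thus ?thesis using True w M0 by (auto simp: E_def mP indicator_def)
    qed (simp add: indicator_def)
  qed
  also have "\<dots> = M * measure Q (C - E)" using Cs Es by simp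
  also have "measure Q (C - E) = measure Q C - measure Q (E \<inter> C)"
    using Q.finite_measure_Diff'[OF Cs Es] by (simp add: Int_commute)
  finally have Ile: "I \<le> M * (measure Q C - measure Q (E \<inter> C))" .
  have "I / measure Q C \<le> M * (measure Q C - measure Q (E \<inter> C)) / measure Q C"
    by (rule divide_right_mono[OF Ile]) (use mpos in simp)
  also have "\<dots> \<le> \<alpha> * M"
  proof -
    have "measure Q C - measure Q (E \<inter> C) \<le> \<alpha> * measure Q C"
    proof -
      have "(1 - \<alpha>) * measure Q C \<le> (1 - \<alpha>) * 1" by (rule mult_left_mono[OF m_le]) (use a in simp)
      thus ?thesis using x by (simp add: algebra_simps)
    qed
    hence "M * (measure Q C - measure Q (E \<inter> C)) \<le> M * (\<alpha> * measure Q C)"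
      by (rule mult_left_mono[OF _ M0])
    thus ?thesis using mpos by (simp add: divide_le_eq mult_ac)
  qed
  finally have "I / measure Q C \<le> \<alpha> * M" .
  thus "regret n \<tau> Ah P eta \<A> \<ge> (1 - \<alpha>) * M_tau \<tau> P eta \<A>"
    unfolding regret_def by (simp add: I_def Q_def C_def M_def[symmetric] algebra_simps)
qed



lemma pair_times_meas:
  assumes Pp: "prob_space P" and A: "A \<in> sets (PiM {..<n} (\<lambda>_. P))" and B: "B \<in> sets borel"
  shows "measure (sample_law n P) (A \<times> B) = measure (PiM {..<n} (\<lambda>_. P)) A * measure (uniform_measure lborel {0..1::real}) B"
proof -
  interpret PP: prob_space "PiM {..<n} (\<lambda>_. P)" by (rule prob_space_PiM) (use Pp in auto)
  interpret U: prob_space "uniform_measure lborel {0..1::real}" by (rule unif_prob)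
  have "emeasure (sample_law n P) (A \<times> B) = emeasure (PiM {..<n} (\<lambda>_. P)) A * emeasure (uniform_measure lborel {0..1::real}) B"
    unfolding sample_law_def by (rule U.emeasure_pair_measure_Times[OF A]) (use B in simp)
  also have "\<dots> = ennreal (measure (PiM {..<n} (\<lambda>_. P)) A * measure (uniform_measure lborel {0..1::real}) B)"
    by (simp add: PP.emeasure_eq_measure U.emeasure_eq_measure ennreal_mult)
  finally show ?thesis by (simp add: measure_def)
qed

lemma unif_le:
  assumes "0 \<le> a" "a \<le> 1"
  shows "measure (uniform_measure lborel {0..1::real}) {..a} = a"
proof -
  have "measure (uniform_measure lborel {0..1::real}) {..a} = measure lborel ({0..1} \<inter> {..a}) / measure lborel {0..1::real}"
    by (rule measure_uniform_measure) auto
  also have "{0..1} \<inter> {..a} = {0..a::real}" using assms by auto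
  finally show ?thesis using assms by simp
qed

lemma space_sample_eq:
  assumes "sets P = sets borel"
  shows "space (sample_law n P) = space (PiM {..<n} (\<lambda>_. P)) \<times> UNIV"
  unfolding sample_law_def by (simp add: space_pair_measure)

lemma snd_le_meas:
  assumes Pp: "prob_space P" and sP: "sets P = sets borel" and a: "0 \<le> a" "a \<le> 1"
  shows "{\<omega> \<in> space (sample_law n P). snd \<omega> \<le> a} \<in> sets (sample_law n P)"
    and "measure (sample_law n P) {\<omega> \<in> space (sample_law n P). snd \<omega> \<le> a} = a"
proof -
  interpret PP: prob_space "PiM {..<n} (\<lambda>_. P)" by (rule prob_space_PiM) (use Pp in auto)
  have eq: "{\<omega> \<in> space (sample_law n P). snd \<omega> \<le> a} = space (PiM {..<n} (\<lambda>_. P)) \<times> {..a}"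
    using space_sample_eq[OF sP] by auto
  show "{\<omega> \<in> space (sample_law n P). snd \<omega> \<le> a} \<in> sets (sample_law n P)"
  proof -
    have "space (PiM {..<n} (\<lambda>_. P)) \<times> {..a} \<in> sets (sample_law n P)"
      unfolding sample_law_def by (rule pair_measureI) auto
    thus ?thesis using eq by simp
  qed
  show "measure (sample_law n P) {\<omega> \<in> space (sample_law n P). snd \<omega> \<le> a} = a"
    unfolding eq by (subst pair_times_meas[OF Pp]) (auto simp: unif_le[OF a] PP.prob_space)
qed

definition Abar :: "'a set \<Rightarrow> real \<Rightarrow> 'a outcome \<Rightarrow> 'a set" where
  "Abar A a = (\<lambda>\<omega>. if snd \<omega> \<le> a then A else {})"

lemma Abar_sel:
  fixes A :: "'a::euclidean_space set"
  assumes "A \<in> \<A>" "{} \<in> \<A>" "A \<in> sets borel"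
  shows "Abar A a \<in> selection_sets n \<A>"
proof -
  have [measurable]: "A \<in> sets borel" by (rule assms(3))
  have "(\<lambda>(x, \<omega>). x \<in> Abar A a \<omega>) = (\<lambda>p::'a \<times> 'a outcome. fst p \<in> A \<and> snd (snd p) \<le> a)"
    by (auto simp: Abar_def)
  moreover have "(\<lambda>p::'a \<times> 'a outcome. fst p \<in> A \<and> snd (snd p) \<le> a) \<in> measurable ((borel :: 'a measure) \<Otimes>\<^sub>M outcome_space n) (count_space UNIV)"
    unfolding pred_def[symmetric] outcome_space_def by measurable
  ultimately show ?thesis using assms by (auto simp: selection_sets_def Abar_def)
qed

lemma Abar_Ahat:
  fixes A :: "'a::euclidean_space set"
  assumes "A \<in> \<A>" "{} \<in> \<A>" "A \<in> sets borel" and a: "0 \<le> \<alpha>" "\<alpha> \<le> 1"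
  shows "Abar A \<alpha> \<in> Ahat n \<tau> \<alpha> \<A> (P_Lip \<mu>)"
proof -
  have "cover_event n (Abar A \<alpha>) eta' \<tau> \<in> sets (sample_law n P') \<and>
        1 - \<alpha> \<le> measure (sample_law n P') (cover_event n (Abar A \<alpha>) eta' \<tau>)"
    if PL: "(P', eta') \<in> P_Lip \<mu>" for P' eta'
  proof -
    have D: "is_distribution P'" using PL by (auto simp: P_Lip_def)
    have Pp: "prob_space P'" and sP: "sets P' = sets borel" using D by (auto simp: is_distribution_def)
    interpret Q: prob_space "sample_law n P'" by (rule sample_prob[OF Pp])
    have spQ: "space (sample_law n P') = space (outcome_space n)" by (rule space_sample[OF sP])
    show ?thesis
    proof (cases "A \<subseteq> superlevel eta' \<tau>")
      case True
      hence "cover_event n (Abar A \<alpha>) eta' \<tau> = space (sample_law n P')"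
        by (auto simp: cover_event_def Abar_def spQ)
      thus ?thesis using a by (simp add: Q.prob_space)
    next
      case False
      define L where "L = {\<omega> \<in> space (sample_law n P'). snd \<omega> \<le> \<alpha>}"
      have Ls: "L \<in> sets (sample_law n P')" and Lm: "measure (sample_law n P') L = \<alpha>"
        using snd_le_meas[OF Pp sP a] by (simp_all add: L_def)
      have "cover_event n (Abar A \<alpha>) eta' \<tau> = space (sample_law n P') - L"
        using False by (auto simp: cover_event_def Abar_def spQ L_def)
      thus ?thesis using Q.prob_compl[OF Ls] Ls Lm by auto
    qed
  qed
  thus ?thesis using Abar_sel[OF assms(1-3)] by (auto simp: Ahat_def)
qed

lemma Abar_indep:
  fixes A :: "'a::euclidean_space set"
  shows "data_indep n \<A> (P_Lip \<mu>) (Abar A \<alpha>)"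
  unfolding data_indep_def
proof (intro ballI, clarify)
  fix A' P' eta' assume A': "A' \<in> \<A>" and PL: "(P', eta') \<in> P_Lip \<mu>"
  have D: "is_distribution P'" using PL by (auto simp: P_Lip_def)
  have Pp: "prob_space P'" and sP: "sets P' = sets borel" using D by (auto simp: is_distribution_def)
  interpret PP: prob_space "PiM {..<n} (\<lambda>_. P')" by (rule prob_space_PiM) (use Pp in auto)
  interpret U: prob_space "uniform_measure lborel {0..1::real}" by (rule unif_prob)
  define Q where "Q = sample_law n P'"
  define V where "V = {u::real. (u \<le> \<alpha> \<and> A = A') \<or> (\<not> u \<le> \<alpha> \<and> {} = A')}"
  have Vs: "V \<in> sets borel" unfolding V_def by measurable
  have spQ: "space Q = space (PiM {..<n} (\<lambda>_. P')) \<times> UNIV" unfolding Q_def by (rule space_sample_eq[OF sP])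
  have E: "{\<omega> \<in> space Q. Abar A \<alpha> \<omega> = A'} = space (PiM {..<n} (\<lambda>_. P')) \<times> V"
    by (auto simp: spQ V_def Abar_def)
  have Es: "{\<omega> \<in> space Q. Abar A \<alpha> \<omega> = A'} \<in> sets Q"
  proof -
    have "space (PiM {..<n} (\<lambda>_. P')) \<times> V \<in> sets Q"
      unfolding Q_def sample_law_def by (rule pair_measureI) (use Vs in auto)
    thus ?thesis using E by simp
  qed
  have "\<forall>B\<in>sets (PiM {..<n} (\<lambda>_. P')).
      measure Q ({\<omega> \<in> space Q. Abar A \<alpha> \<omega> = A'} \<inter> (fst -` B \<inter> space Q)) =
      measure Q {\<omega> \<in> space Q. Abar A \<alpha> \<omega> = A'} * measure Q (fst -` B \<inter> space Q)"
  proof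
    fix B assume B: "B \<in> sets (PiM {..<n} (\<lambda>_. P'))"
    have Bsub: "B \<subseteq> space (PiM {..<n} (\<lambda>_. P'))" using sets.sets_into_space[OF B] .
    have f: "fst -` B \<inter> space Q = B \<times> UNIV" using Bsub by (auto simp: spQ)
    have i: "{\<omega> \<in> space Q. Abar A \<alpha> \<omega> = A'} \<inter> (fst -` B \<inter> space Q) = B \<times> V"
      unfolding E f using Bsub by auto
    show "measure Q ({\<omega> \<in> space Q. Abar A \<alpha> \<omega> = A'} \<inter> (fst -` B \<inter> space Q)) =
      measure Q {\<omega> \<in> space Q. Abar A \<alpha> \<omega> = A'} * measure Q (fst -` B \<inter> space Q)"
    proof -
      have "measure Q (B \<times> V) = measure Q (space (PiM {..<n} (\<lambda>_. P')) \<times> V) * measure Q (B \<times> UNIV)"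
        unfolding Q_def
        using pair_times_meas[OF Pp B Vs] pair_times_meas[OF Pp sets.top[of "PiM {..<n} (\<lambda>_. P')"] Vs]
          pair_times_meas[OF Pp B, of UNIV]
        by (simp add: PP.prob_space U.prob_space)
      thus ?thesis by (subst i, subst f, subst E)
    qed
  qed
  then show "let Q = sample_law n P'; E = {\<omega> \<in> space Q. Abar A \<alpha> \<omega> = A'}
       in E \<in> sets Q \<and> (\<forall>B\<in>sets (PiM {..<n} (\<lambda>_. P')).
             measure Q (E \<inter> (fst -` B \<inter> space Q)) = measure Q E * measure Q (fst -` B \<inter> space Q))"
    using Es by (simp add: Q_def Let_def)
qed

lemma Abar_regret:
  fixes A :: "'a::euclidean_space set"
  assumes PL: "(P, eta) \<in> P_Lip \<mu>" and A: "A \<subseteq> superlevel eta \<tau>" and a: "0 \<le> \<alpha>" "\<alpha> \<le> 1"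
  shows "regret n \<tau> (Abar A \<alpha>) P eta \<A> = M_tau \<tau> P eta \<A> - \<alpha> * measure (marginal P) A"
proof -
  have D: "is_distribution P" using PL by (auto simp: P_Lip_def)
  have Pp: "prob_space P" and sP: "sets P = sets borel" using D by (auto simp: is_distribution_def)
  define Q where "Q = sample_law n P"
  interpret Q: prob_space Q unfolding Q_def by (rule sample_prob[OF Pp])
  have spQ: "space Q = space (outcome_space n)" unfolding Q_def by (rule space_sample[OF sP])
  have C: "cover_event n (Abar A \<alpha>) eta \<tau> = space Q"
    using A by (auto simp: cover_event_def Abar_def spQ)
  define L where "L = {\<omega> \<in> space Q. snd \<omega> \<le> \<alpha>}"
  have Ls: "L \<in> sets Q" and Lm: "measure Q L = \<alpha>"
    using snd_le_meas[OF Pp sP a] by (simp_all add: L_def Q_def)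
  have "(\<integral>\<omega>. indicator (space Q) \<omega> * measure (marginal P) (Abar A \<alpha> \<omega>) \<partial>Q)
      = (\<integral>\<omega>. measure (marginal P) A * indicator L \<omega> \<partial>Q)"
    by (rule Bochner_Integration.integral_cong) (auto simp: L_def Abar_def indicator_def)
  also have "\<dots> = measure (marginal P) A * \<alpha>" using Ls Lm by simp
  finally show ?thesis unfolding regret_def C Q_def[symmetric] by (simp add: Q.prob_space)
qed



theorem proposition1:
  fixes \<mu> :: "'a::euclidean_space measure"
    and \<A> :: "'a set set"
    and Ah :: "'a outcome \<Rightarrow> 'a set"
    and n :: nat and \<tau> \<alpha> :: real
    and P :: "('a \<times> real) measure" and eta :: "'a \<Rightarrow> real"
  assumes "0 < \<tau>" "\<tau> < 1" "0 < \<alpha>" "\<alpha> < 1"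
    and "prob_space \<mu>" "sets \<mu> = sets borel" "\<forall>x. measure \<mu> {x} = 0"
    and "\<A> \<subseteq> sets borel" "{} \<in> \<A>" "finite_VC \<A>"
    and "Ah \<in> Ahat n \<tau> \<alpha> \<A> (P_Lip \<mu>)"
    and "(P, eta) \<in> P_Lip \<mu>"
  shows "let Q = sample_law n P;
             C = cover_event n Ah eta \<tau>;
             E = {\<omega> \<in> space Q. measure \<mu> (Ah \<omega>) = 0}
         in cond_prob Q E C \<ge> measure Q (E \<inter> C)
          \<and> measure Q (E \<inter> C) \<ge> 1 - \<alpha>
          \<and> regret n \<tau> Ah P eta \<A> \<ge> (1 - \<alpha>) * M_tau \<tau> P eta \<A>
          \<and> (1 - \<alpha>) * M_tau \<tau> P eta \<A> =
              Inf {regret n \<tau> Ab P eta \<A> | Ab.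
                     Ab \<in> Ahat n \<tau> \<alpha> \<A> (P_Lip \<mu>) \<and> data_indep n \<A> (P_Lip \<mu>) Ab}"
proof -
  note lb = regret_lb[OF assms(1,3,4,5,6,7,8,9,11,12)]
  define M where "M = M_tau \<tau> P eta \<A>"
  define R where "R = {regret n \<tau> Ab P eta \<A> | Ab.
                     Ab \<in> Ahat n \<tau> \<alpha> \<A> (P_Lip \<mu>) \<and> data_indep n \<A> (P_Lip \<mu>) Ab}"
  have mP: "marginal P = \<mu>" using assms(12) by (auto simp: P_Lip_def)
  have mp: "prob_space (marginal P)" using mP assms(5) by simp
  have low: "(1 - \<alpha>) * M \<le> x" if "x \<in> R" for x
    using that regret_lb(3)[OF assms(1,3,4,5,6,7,8,9) _ assms(12)] by (auto simp: R_def M_def)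
  have inR: "M - \<alpha> * measure \<mu> A \<in> R" if "A \<in> \<A>" "A \<subseteq> superlevel eta \<tau>" for A
  proof -
    have "A \<in> sets borel" using that assms(8) by auto
    hence "Abar A \<alpha> \<in> Ahat n \<tau> \<alpha> \<A> (P_Lip \<mu>)"
      using Abar_Ahat[OF that(1) assms(9)] assms(3,4) by simp
    moreover have "regret n \<tau> (Abar A \<alpha>) P eta \<A> = M - \<alpha> * measure \<mu> A"
      using Abar_regret[OF assms(12) that(2)] assms(3,4) mP by (simp add: M_def)
    moreover have "data_indep n \<A> (P_Lip \<mu>) (Abar A \<alpha>)" by (rule Abar_indep)
    ultimately show ?thesis unfolding R_def by (intro CollectI exI[of _ "Abar A \<alpha>"]) simp
  qed
  have ne: "R \<noteq> {}"
  proof -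
    obtain A where "A \<in> \<A>" "A \<subseteq> superlevel eta \<tau>"
      using M_props(3)[OF mp assms(9), where eta=eta and \<tau>=\<tau> and \<epsilon>=1] by auto
    thus ?thesis using inR by blast
  qed
  have great: "y \<le> (1 - \<alpha>) * M" if y: "\<And>x. x \<in> R \<Longrightarrow> y \<le> x" for y
  proof (rule ccontr)
    assume "\<not> y \<le> (1 - \<alpha>) * M"
    hence gt: "(1 - \<alpha>) * M < y" by simp
    define \<epsilon> where "\<epsilon> = (y - (1 - \<alpha>) * M) / \<alpha>"
    have epos: "0 < \<epsilon>" using gt assms(3) by (simp add: \<epsilon>_def)
    obtain A where A: "A \<in> \<A>" "A \<subseteq> superlevel eta \<tau>" "M - \<epsilon> < measure (marginal P) A"
      using M_props(3)[OF mp assms(9) epos, where eta=eta and \<tau>=\<tau>] by (auto simp: M_def)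
    have "y \<le> M - \<alpha> * measure \<mu> A" using y inR[OF A(1,2)] by blast
    moreover have "\<alpha> * (M - \<epsilon>) < \<alpha> * measure \<mu> A" using A(3) assms(3) mP by simp
    moreover have "\<alpha> * \<epsilon> = y - (1 - \<alpha>) * M" using assms(3) by (simp add: \<epsilon>_def)
    ultimately show False by (simp add: algebra_simps)
  qed
  have inf: "(1 - \<alpha>) * M = Inf R"
    by (rule cInf_eq_non_empty[OF ne low great, symmetric])
  show ?thesis
    unfolding Let_def using lb inf by (simp add: M_def R_def)
qed


end
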